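(* Let $n\ge3$ be odd, let $K$ be a field containing an element $v$ transcendental over a subfield $F$, let $q$ be an indeterminate, and let $J_q(n)=D_n/\omega(q)$ with $D_n$ defined over $K(q)$. Then the images in $J_q(n)$ of the elements $[S_1,S_2,\tau]$, where $t$ ranges over positive integers, $S_1,S_2\in\mathrm{Ann}(n)\cap I(t)$ and $\tau\in\{0,1,\dots,t-1\}$, form a $K(q)$-basis of $J_q(n)$.
   Context: Put $[2]=v+v^{-1}$. An affine $n$-diagram consists of the nodes $\mathbb{Z}\times\{0,1\}\subset\mathbb{R}^2$ together with curves called edges such that: every node is an endpoint of exactly one edge; edges lie in $\mathbb{R}\times[0,1]$; an edge not joining two nodes is an infinite horizontal line meeting no node, and there are finitely many such; no two edges intersect; the diagram is invariant under horizontal translation by $n$. Diagrams are taken up to isotopy (equivalently drawn on a cylinder with nodes $1,\dots,n$, indices mod $n$, on a top and a bottom circle). An edge is vertical if it joins a top node to a bottom node. Product $AB$: place $A$ on top of $B$, identify the middle rows, remove the $x$ closed loops formed to get $C$; $AB=[2]^xC$. $D_n$ is the algebra with basis the affine $n$-diagrams. An involution $S$ of $\{1,\dots,n\}$ is annular if for each pair $i<j$ interchanged by $S$: $S(\{i,\dots,j\})=\{i,\dots,j\}$, and $\{i,\dots,j\}$ contains either no fixed point or all fixed points of $S$. $\mathrm{Ann}(n)$: annular involutions; $I(t)$: involutions with exactly $t$ fixed points. For a diagram $D$ with a vertical edge, $w_1(D)$ is the number of pairs $(i,j)\in\mathbb{Z}^2$, $i>j$, with bottom node $(j,0)$ joined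 to top node $(i,1)$ by an edge crossing $x=1/2$; $w_2(D)$ likewise with $i<j$; $w(D)=w_1(D)-w_2(D)$. The map $D\mapsto(S_1,S_2,w(D))$, with $S_1$ (resp. $S_2$) interchanging $i,j$ iff top (resp. bottom) nodes $i,j$ are joined, is a bijection from diagrams with a vertical edge (all diagrams, when $n$ is odd) onto triples with $S_1,S_2\in\mathrm{Ann}(n)\cap I(t)$, $t>0$, $w\in\mathbb{Z}$; $[S_1,S_2,w]$ denotes the corresponding diagram. $\omega(q)$ is the two-sided ideal of $D_n$ spanned by all $[S_1,S_2,w]-q^s[S_1,S_2,w+ts]$ with $t>0$, $S_1,S_2\in\mathrm{Ann}(n)\cap I(t)$, $w,s\in\mathbb{Z}$. *)

theory Defs
  imports "HOL-Computational_Algebra.Polynomial" "HOL-Computational_Algebra.Fraction_Field"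
begin

text \<open>A node (i, True) is the top node (i,1); (i, False) is the bottom node (i,0).
  A diagram without infinite horizontal lines is encoded by the fixed-point-free
  involution of the node set sending each node to the other endpoint of its edge.\<close>

type_synonym node = "int \<times> bool"
type_synonym diag = "node \<Rightarrow> node"

text \<open>Linear order on the boundary of the strip R x [0,1] (bottom row left to right,
  then top row right to left); two chords can be drawn disjointly iff they do not interleave.\<close>
definition bd_less :: "node \<Rightarrow> node \<Rightarrow> bool" where
  "bd_less x y \<longleftrightarrow>
     (if snd x = False \<and> snd y = False then fst x < fst y
      else if snd x = False \<and> snd y = True then True
      else if snd x = True \<and> snd y = False then False
      else fst y < fst x)"

definition noncrossing :: "diag \<Rightarrow> bool" where
  "noncrossing m \<longleftrightarrow>
     \<not> (\<exists>a c. bd_less a c \<and> bd_less c (m a) \<and> bd_less (m a) (m c))"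

definition is_diagram :: "nat \<Rightarrow> diag \<Rightarrow> bool" where
  "is_diagram n m \<longleftrightarrow>
     (\<forall>x. m x \<noteq> x) \<and> (\<forall>x. m (m x) = x) \<and>
     (\<forall>i r. m (i + int n, r) = (fst (m (i, r)) + int n, snd (m (i, r)))) \<and>
     noncrossing m"

definition involution_on :: "nat \<Rightarrow> (nat \<Rightarrow> nat) \<Rightarrow> bool" where
  "involution_on n S \<longleftrightarrow>
     (\<forall>i\<in>{1..n}. S i \<in> {1..n} \<and> S (S i) = i) \<and> (\<forall>i. i \<notin> {1..n} \<longrightarrow> S i = i)"

definition fixed_points :: "nat \<Rightarrow> (nat \<Rightarrow> nat) \<Rightarrow> nat set" where
  "fixed_points n S = {k \<in> {1..n}. S k = k}"

definition Ann :: "nat \<Rightarrow> (nat \<Rightarrow> nat) set" where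
  "Ann n = {S. involution_on n S \<and>
     (\<forall>i j. 1 \<le> i \<longrightarrow> i < j \<longrightarrow> j \<le> n \<longrightarrow> S i = j \<longrightarrow>
        S ` {i..j} = {i..j} \<and>
        ({k \<in> {i..j}. S k = k} = {} \<or> fixed_points n S \<subseteq> {i..j}))}"

definition Inv :: "nat \<Rightarrow> nat \<Rightarrow> (nat \<Rightarrow> nat) set" where
  "Inv n t = {S. involution_on n S \<and> card (fixed_points n S) = t}"

definition red :: "nat \<Rightarrow> int \<Rightarrow> nat" where
  "red n i = nat ((i - 1) mod int n + 1)"

definition topS :: "nat \<Rightarrow> diag \<Rightarrow> nat \<Rightarrow> nat" where
  "topS n D i = (if i \<in> {1..n} \<and> snd (D (int i, True)) then red n (fst (D (int i, True))) else i)"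

definition botS :: "nat \<Rightarrow> diag \<Rightarrow> nat \<Rightarrow> nat" where
  "botS n D i = (if i \<in> {1..n} \<and> \<not> snd (D (int i, False)) then red n (fst (D (int i, False))) else i)"

definition w1 :: "diag \<Rightarrow> nat" where
  "w1 D = card {(i, j). i > j \<and> D (j, False) = (i, True) \<and> j \<le> 0 \<and> 1 \<le> i}"

definition w2 :: "diag \<Rightarrow> nat" where
  "w2 D = card {(i, j). i < j \<and> D (j, False) = (i, True) \<and> i \<le> 0 \<and> 1 \<le> j}"

definition wind :: "diag \<Rightarrow> int" where
  "wind D = int (w1 D) - int (w2 D)"

text \<open>[S1, S2, w]: the diagram corresponding to the triple (bijection stated in the paper).\<close>
definition bracket :: "nat \<Rightarrow> (nat \<Rightarrow> nat) \<Rightarrow> (nat \<Rightarrow> nat) \<Rightarrow> int \<Rightarrow> diag" where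
  "bracket n S1 S2 w =
     (THE D. is_diagram n D \<and> topS n D = S1 \<and> botS n D = S2 \<and> wind D = w)"

definition Dn :: "nat \<Rightarrow> (diag \<Rightarrow> 'a::field) set" where
  "Dn n = {f. finite {D. f D \<noteq> 0} \<and> (\<forall>D. f D \<noteq> 0 \<longrightarrow> is_diagram n D)}"

definition dvec :: "diag \<Rightarrow> diag \<Rightarrow> 'a::field" where
  "dvec D = (\<lambda>E. if E = D then 1 else 0)"

definition lin_span :: "('b \<Rightarrow> 'a::field) set \<Rightarrow> ('b \<Rightarrow> 'a) set" where
  "lin_span X = {(\<lambda>E. \<Sum>g\<in>G. c g * g E) | G c. finite G \<and> G \<subseteq> X}"

definition omega :: "nat \<Rightarrow> 'a::field \<Rightarrow> (diag \<Rightarrow> 'a) set" where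
  "omega n q = lin_span
     {(\<lambda>E. dvec (bracket n S1 S2 w) E - q powi s * dvec (bracket n S1 S2 (w + int t * s)) E)
       | t S1 S2 w s. t > 0 \<and> S1 \<in> Ann n \<inter> Inv n t \<and> S2 \<in> Ann n \<inter> Inv n t}"

definition quotient_basis ::
  "('b \<Rightarrow> 'a::field) set \<Rightarrow> ('b \<Rightarrow> 'a) set \<Rightarrow> 'i set \<Rightarrow> ('i \<Rightarrow> 'b \<Rightarrow> 'a) \<Rightarrow> bool" where
  "quotient_basis V W I b \<longleftrightarrow>
     (\<forall>i\<in>I. b i \<in> V) \<and>
     (\<forall>x\<in>V. \<exists>G c. finite G \<and> G \<subseteq> I \<and> (\<lambda>E. x E - (\<Sum>i\<in>G. c i * b i E)) \<in> W) \<and>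
     (\<forall>G c. finite G \<longrightarrow> G \<subseteq> I \<longrightarrow> (\<lambda>E. \<Sum>i\<in>G. c i * b i E) \<in> W \<longrightarrow> (\<forall>i\<in>G. c i = 0))"

definition qvar :: "'k::field poly fract" where
  "qvar = Fract [:0, 1:] 1"

definition is_subfield :: "'k::field set \<Rightarrow> bool" where
  "is_subfield F \<longleftrightarrow> 0 \<in> F \<and> 1 \<in> F \<and> (\<forall>x\<in>F. \<forall>y\<in>F. x + y \<in> F \<and> x * y \<in> F) \<and>
     (\<forall>x\<in>F. - x \<in> F \<and> inverse x \<in> F)"

definition transcendental_over :: "'k::field \<Rightarrow> 'k set \<Rightarrow> bool" where
  "transcendental_over v F \<longleftrightarrow>
     (\<forall>p. p \<noteq> 0 \<longrightarrow> (\<forall>i. coeff p i \<in> F) \<longrightarrow> poly p v \<noteq> 0)"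

definition Jindex :: "nat \<Rightarrow> (nat \<times> (nat \<Rightarrow> nat) \<times> (nat \<Rightarrow> nat) \<times> nat) set" where
  "Jindex n = {(t, S1, S2, \<tau>). t > 0 \<and> S1 \<in> Ann n \<inter> Inv n t \<and> S2 \<in> Ann n \<inter> Inv n t \<and> \<tau> < t}"

end

theory Submission
  imports Defs
begin


lemma red_int: "n > 0 \<Longrightarrow> int (red n z) = (z - 1) mod int n + 1"
  unfolding red_def by simp

lemma red_ge1: "n > 0 \<Longrightarrow> 1 \<le> red n z"
proof -
  assume n: "n > 0"
  have "(z - 1) mod int n \<ge> 0" using n by simp
  then have "int (red n z) \<ge> 1" using red_int[OF n, of z] by linarith
  then show ?thesis by simp
qed

lemma red_le: "n > 0 \<Longrightarrow> red n z \<le> n"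
proof -
  assume n: "n > 0"
  have "(z - 1) mod int n < int n" using n by simp
  then have "int (red n z) \<le> int n" using red_int[OF n, of z] by linarith
  then show ?thesis by simp
qed

lemma red_decomp: "n > 0 \<Longrightarrow> z = int (red n z) + int n * ((z - 1) div int n)"
proof -
  assume n: "n > 0"
  have "z - 1 = int n * ((z - 1) div int n) + (z - 1) mod int n" by simp
  then show ?thesis using red_int[OF n, of z] by linarith
qed

lemma red_shift: "n > 0 \<Longrightarrow> red n (z + k * int n) = red n z"
proof -
  have "(z + k * int n - 1) mod int n = (z - 1) mod int n"
  proof -
    have "z + k * int n - 1 = (z - 1) + k * int n" by simp
    then show ?thesis by (simp only: mod_mult_self1)
  qed
  then show ?thesis unfolding red_def by simp
qed

lemma red_shift': "n > 0 \<Longrightarrow> red n (z + int n * k) = red n z"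
  using red_shift[of n z k] by (simp add: mult.commute)

lemma red_id: "1 \<le> z \<Longrightarrow> z \<le> int n \<Longrightarrow> red n z = nat z"
proof -
  assume a: "1 \<le> z" "z \<le> int n"
  then have "(z - 1) mod int n = z - 1" by (intro mod_pos_pos_trivial) auto
  then show ?thesis unfolding red_def by simp
qed

lemma red_id_nat: "1 \<le> i \<Longrightarrow> i \<le> n \<Longrightarrow> red n (int i) = i"
  using red_id[of "int i" n] by simp

lemma red_eqD: "n > 0 \<Longrightarrow> red n a = red n b \<Longrightarrow> \<exists>k. a = b + k * int n"
proof -
  assume n: "n > 0" and e: "red n a = red n b"
  have "a = int (red n a) + int n * ((a - 1) div int n)" using red_decomp[OF n] .
  moreover have "b = int (red n b) + int n * ((b - 1) div int n)" using red_decomp[OF n] .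
  ultimately have "a = b + ((a - 1) div int n - (b - 1) div int n) * int n"
    using e by (simp add: algebra_simps)
  then show ?thesis by blast
qed

section \<open>Noncrossing in terms of nesting properties\<close>

definition propT :: "diag \<Rightarrow> bool" where
  "propT D \<longleftrightarrow> (\<forall>z y w. D (z, True) = (y, True) \<longrightarrow> z < w \<longrightarrow> w < y \<longrightarrow>
      (\<exists>u. D (w, True) = (u, True) \<and> z < u \<and> u < y))"

definition propB :: "diag \<Rightarrow> bool" where
  "propB D \<longleftrightarrow> (\<forall>z y w. D (z, False) = (y, False) \<longrightarrow> z < w \<longrightarrow> w < y \<longrightarrow>
      (\<exists>u. D (w, False) = (u, False) \<and> z < u \<and> u < y))"

definition propV :: "diag \<Rightarrow> bool" where
  "propV D \<longleftrightarrow> (\<forall>q q' p p'. D (q, False) = (p, True) \<longrightarrow> D (q', False) = (p', True) \<longrightarrow>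
      q < q' \<longrightarrow> p < p')"

lemma bd_simps[simp]:
  "bd_less (a, False) (b, False) \<longleftrightarrow> a < b"
  "bd_less (a, False) (b, True)"
  "\<not> bd_less (a, True) (b, False)"
  "bd_less (a, True) (b, True) \<longleftrightarrow> b < a"
  unfolding bd_less_def by auto

lemma nc_imp_props:
  assumes inv: "\<And>x. D (D x) = x" and nf: "\<And>x. D x \<noteq> x" and nc: "noncrossing D"
  shows "propT D" "propB D" "propV D"
proof -
  have ni: "\<not> (bd_less a c \<and> bd_less c (D a) \<and> bd_less (D a) (D c))" for a c
    using nc unfolding noncrossing_def by blast
  show "propT D" unfolding propT_def
  proof (intro allI impI)
    fix z y w assume e: "D (z, True) = (y, True)" and zw: "z < w" and wy: "w < y"
    have e2: "D (y, True) = (z, True)" using inv[of "(z,True)"] e by simp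
    obtain u r where ur: "D (w, True) = (u, r)" by (cases "D (w, True)") auto
    have ur2: "D (u, r) = (w, True)" using inv[of "(w,True)"] ur by simp
    show "\<exists>u. D (w, True) = (u, True) \<and> z < u \<and> u < y"
    proof (cases r)
      case False
      have "bd_less (u, r) (y, True) \<and> bd_less (y, True) (D (u, r)) \<and> bd_less (D (u, r)) (D (y, True))"
        using False ur2 e2 zw wy by simp
      then show ?thesis using ni by blast
    next
      case True
      have "u \<noteq> y" using ur2 e2 zw True by auto
      moreover have "u \<noteq> z" using ur2 e wy True by auto
      moreover have "\<not> y < u"
      proof
        assume "y < u"
        then have "bd_less (u, r) (y, True) \<and> bd_less (y, True) (D (u, r)) \<and> bd_less (D (u, r)) (D (y, True))"
          using True ur2 e2 zw wy by simp
        then show False using ni by blast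
      qed
      moreover have "\<not> u < z"
      proof
        assume "u < z"
        then have "bd_less (y, True) (w, True) \<and> bd_less (w, True) (D (y, True)) \<and> bd_less (D (y, True)) (D (w, True))"
          using True ur e2 zw wy by simp
        then show False using ni by blast
      qed
      ultimately show ?thesis using True ur by force
    qed
  qed
  show "propB D" unfolding propB_def
  proof (intro allI impI)
    fix z y w assume e: "D (z, False) = (y, False)" and zw: "z < w" and wy: "w < y"
    have e2: "D (y, False) = (z, False)" using inv[of "(z,False)"] e by simp
    obtain u r where ur: "D (w, False) = (u, r)" by (cases "D (w, False)") auto
    have ur2: "D (u, r) = (w, False)" using inv[of "(w,False)"] ur by simp
    show "\<exists>u. D (w, False) = (u, False) \<and> z < u \<and> u < y"
    proof (cases r)
      case True
      have "bd_less (z, False) (w, False) \<and> bd_less (w, False) (D (z, False)) \<and> bd_less (D (z, False)) (D (w, False))"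
        using True ur e zw wy by simp
      then show ?thesis using ni by blast
    next
      case False
      have "u \<noteq> y" using ur2 e2 zw False by auto
      moreover have "u \<noteq> z" using ur2 e wy False by auto
      moreover have "\<not> y < u"
      proof
        assume "y < u"
        then have "bd_less (z, False) (w, False) \<and> bd_less (w, False) (D (z, False)) \<and> bd_less (D (z, False)) (D (w, False))"
          using False ur e zw wy by simp
        then show False using ni by blast
      qed
      moreover have "\<not> u < z"
      proof
        assume "u < z"
        then have "bd_less (u, False) (z, False) \<and> bd_less (z, False) (D (u, False)) \<and> bd_less (D (u, False)) (D (z, False))"
          using False ur2 e zw wy by simp
        then show False using ni by blast
      qed
      ultimately show ?thesis using False ur by force
    qed
  qed
  show "propV D" unfolding propV_def
  proof (intro allI impI)
    fix q q' p p' assume e: "D (q, False) = (p, True)" and e': "D (q', False) = (p', True)" and qq: "q < q'"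
    have "p \<noteq> p'" using inv[of "(q,False)"] inv[of "(q',False)"] e e' qq by auto
    moreover have "\<not> p' < p"
    proof
      assume "p' < p"
      then have "bd_less (q, False) (q', False) \<and> bd_less (q', False) (D (q, False)) \<and> bd_less (D (q, False)) (D (q', False))"
        using e e' qq by simp
      then show False using ni by blast
    qed
    ultimately show "p < p'" by simp
  qed
qed

lemma props_imp_nc:
  assumes inv: "\<And>x. D (D x) = x" and T: "propT D" and B: "propB D" and V: "propV D"
  shows "noncrossing D"
  unfolding noncrossing_def
proof
  assume "\<exists>a c. bd_less a c \<and> bd_less c (D a) \<and> bd_less (D a) (D c)"
  then obtain a1 a2 c1 c2 where h: "bd_less (a1, a2) (c1, c2)" "bd_less (c1, c2) (D (a1, a2))"
     "bd_less (D (a1, a2)) (D (c1, c2))" by auto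
  obtain b1 b2 where b: "D (a1, a2) = (b1, b2)" by (cases "D (a1, a2)") auto
  obtain d1 d2 where d: "D (c1, c2) = (d1, d2)" by (cases "D (c1, c2)") auto
  have b': "D (b1, b2) = (a1, a2)" using inv[of "(a1,a2)"] b by simp
  have d': "D (d1, d2) = (c1, c2)" using inv[of "(c1,c2)"] d by simp
  show False
  proof (cases a2)
    case True
    then have "c2 \<and> b2 \<and> d2" using h b d by (cases c2; cases b2; cases d2; simp)
    then have o: "a1 > c1" "c1 > b1" "b1 > d1" using h b d True by auto
    have "D (b1, True) = (a1, True)" using b' True \<open>c2 \<and> b2 \<and> d2\<close> by simp
    then obtain u where "D (c1, True) = (u, True)" "b1 < u" using T o unfolding propT_def by blast
    then show False using d o \<open>c2 \<and> b2 \<and> d2\<close> by simp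
  next
    case a2: False
    show False
    proof (cases b2)
      case False
      then have c2: "\<not> c2" using h b by (cases c2) auto
      then have o: "a1 < c1" "c1 < b1" using h b a2 False by auto
      have "D (a1, False) = (b1, False)" using b a2 False by simp
      then obtain u where u: "D (c1, False) = (u, False)" "u < b1" using B o unfolding propB_def by blast
      have "bd_less (b1, False) (D (c1, c2))" using h b a2 False by simp
      then show False using u c2 by simp
    next
      case True
      show False
      proof (cases c2)
        case False
        then have o: "a1 < c1" using h a2 by simp
        have "bd_less (b1, True) (d1, d2)" using h b d True by simp
        then have d2: "d2" and "d1 < b1" by (cases d2; simp)+
        moreover have "D (a1, False) = (b1, True)" "D (c1, False) = (d1, True)" using b d a2 False True d2 by auto
        ultimately show False using V o unfolding propV_def by force
      next
        case c2: True
        have o1: "b1 < c1" using h b True c2 by simp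
        have "bd_less (b1, True) (d1, d2)" using h b d True by simp
        then have d2: "d2" and o2: "d1 < b1" by (cases d2; simp)+
        have "D (d1, True) = (c1, True)" using d' d2 c2 by simp
        then obtain u where "D (b1, True) = (u, True)" using T o1 o2 unfolding propT_def by blast
        then show False using b' a2 True by simp
      qed
    qed
  qed
qed

locale dg =
  fixes n :: nat and D :: diag
  assumes isd: "is_diagram n D" and npos: "n > 0"
begin

lemma nofix: "D x \<noteq> x" using isd unfolding is_diagram_def by blast
lemma invol[simp]: "D (D x) = x" using isd unfolding is_diagram_def by blast
lemma per1: "D (i + int n, r) = (fst (D (i, r)) + int n, snd (D (i, r)))"
  using isd unfolding is_diagram_def by blast
lemma nc: "noncrossing D" using isd unfolding is_diagram_def by blast

lemma per_nat: "D (i + int k * int n, r) = (fst (D (i, r)) + int k * int n, snd (D (i, r)))"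
proof (induction k)
  case 0
  then show ?case by simp
next
  case (Suc k)
  have "D (i + int (Suc k) * int n, r) = D ((i + int k * int n) + int n, r)" by (simp add: algebra_simps)
  also have "\<dots> = (fst (D (i + int k * int n, r)) + int n, snd (D (i + int k * int n, r)))"
    using per1 by simp
  also have "\<dots> = (fst (D (i, r)) + int (Suc k) * int n, snd (D (i, r)))"
    using Suc by (simp add: algebra_simps)
  finally show ?case .
qed

lemma per: "D (i + k * int n, r) = (fst (D (i, r)) + k * int n, snd (D (i, r)))"
proof (cases "k \<ge> 0")
  case True
  then obtain m where "k = int m" using nonneg_int_cases by blast
  then show ?thesis using per_nat by simp
next
  case False
  then obtain m where m: "k = - int m" by (metis nle_le nonpos_int_cases)
  have "D ((i - int m * int n) + int m * int n, r) = (fst (D (i - int m * int n, r)) + int m * int n, snd (D (i - int m * int n, r)))"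
    using per_nat by blast
  then have "D (i, r) = (fst (D (i - int m * int n, r)) + int m * int n, snd (D (i - int m * int n, r)))" by simp
  then have "fst (D (i - int m * int n, r)) = fst (D (i, r)) - int m * int n"
     "snd (D (i - int m * int n, r)) = snd (D (i, r))" by auto
  then show ?thesis using m by (simp add: prod_eq_iff)
qed

end



lemma int_mult_bounds:
  fixes k n :: int
  assumes "0 < n" "-2 * n < k * n" "k * n < n"
  shows "k = 0 \<or> k = -1"
proof -
  have "k < 1"
  proof (rule ccontr)
    assume "\<not> k < 1" then have a: "(k - 1) * n \<ge> 0" using assms(1) by (intro mult_nonneg_nonneg) auto
    have b: "(k - 1) * n = k * n - n" by (simp add: left_diff_distrib)
    from a b assms(3) show False by linarith
  qed
  moreover have "k > -2"
  proof (rule ccontr)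
    assume "\<not> k > -2" then have a: "(k + 2) * n \<le> 0" using assms(1) by (simp add: mult_nonpos_nonneg)
    have b: "(k + 2) * n = k * n + 2 * n" by (simp add: distrib_right)
    from a b assms(2) show False by linarith
  qed
  ultimately show ?thesis by auto
qed

lemma int_mult_zero:
  fixes k n :: int
  assumes "0 < n" "- n < k * n" "k * n < n"
  shows "k = 0"
proof -
  have "k < 1"
  proof (rule ccontr)
    assume "\<not> k < 1" then have a: "(k - 1) * n \<ge> 0" using assms(1) by (intro mult_nonneg_nonneg) auto
    have b: "(k - 1) * n = k * n - n" by (simp add: left_diff_distrib)
    from a b assms(3) show False by linarith
  qed
  moreover have "k > -1"
  proof (rule ccontr)
    assume "\<not> k > -1" then have a: "(k + 1) * n \<le> 0" using assms(1) by (simp add: mult_nonpos_nonneg)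
    have b: "(k + 1) * n = k * n + n" by (simp add: distrib_right)
    from a b assms(2) show False by linarith
  qed
  ultimately show ?thesis by auto
qed

definition halfS :: "nat \<Rightarrow> diag \<Rightarrow> bool \<Rightarrow> nat \<Rightarrow> nat" where
  "halfS n D r i = (if i \<in> {1..n} \<and> snd (D (int i, r)) = r then red n (fst (D (int i, r))) else i)"

lemma topS_halfS: "topS n D = halfS n D True"
  unfolding topS_def halfS_def by auto

lemma botS_halfS: "botS n D = halfS n D False"
  unfolding botS_def halfS_def by auto

context dg
begin

lemma per_neg: "D (i - k * int n, r) = (fst (D (i, r)) - k * int n, snd (D (i, r)))"
  using per[of i "-k" r] by simp

lemma pT: "propT D" and pB: "propB D" and pV: "propV D"
  using nc_imp_props[OF _ nofix nc] by auto

lemma pH: "D (z, r) = (y, r) \<Longrightarrow> z < w \<Longrightarrow> w < y \<Longrightarrow> \<exists>u. D (w, r) = (u, r) \<and> z < u \<and> u < y"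
  using pT pB unfolding propT_def propB_def by (cases r) auto

lemma arc_len_aux:
  assumes e: "D (z, r) = (y, r)" and zy: "z < y"
  shows "y - z < int n"
proof (rule ccontr)
  assume "\<not> y - z < int n"
  then have le: "z + int n \<le> y" by simp
  have e2: "D (y, r) = (z, r)" using invol[of "(z, r)"] e by simp
  have p: "D (z + int n, r) = (y + int n, r)" using per1[of z r] e by simp
  show False
  proof (cases "z + int n = y")
    case True
    then show False using p e2 npos by simp
  next
    case False
    then have lt: "z + int n < y" using le by simp
    have zl: "z < z + int n" using npos by simp
    obtain u where "D (z + int n, r) = (u, r)" "u < y" using pH[OF e zl lt] by blast
    then show False using p by simp
  qed
qed

lemma arc_len:
  assumes e: "D (z, r) = (y, r)"
  shows "y \<noteq> z" "y - z < int n" "z - y < int n"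
proof -
  show "y \<noteq> z" using e nofix[of "(z, r)"] by auto
  have e2: "D (y, r) = (z, r)" using invol[of "(z, r)"] e by simp
  show "y - z < int n"
  proof (cases "z < y")
    case True then show ?thesis using arc_len_aux[OF e] by simp
  next
    case False then show ?thesis using npos by simp
  qed
  show "z - y < int n"
  proof (cases "y < z")
    case True then show ?thesis using arc_len_aux[OF e2] by simp
  next
    case False then show ?thesis using npos by simp
  qed
qed

lemma arc_red_ne:
  assumes e: "D (z, r) = (y, r)"
  shows "red n y \<noteq> red n z"
proof
  assume "red n y = red n z"
  then obtain k where k: "y = z + k * int n" using red_eqD[OF npos] by blast
  have "- int n < k * int n" "k * int n < int n" using arc_len[OF e] k by auto
  then have "k = 0" using int_mult_zero npos by simp
  then show False using arc_len(1)[OF e] k by simp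
qed

lemma D_red: "D (z, r) = (fst (D (int (red n z), r)) + ((z - 1) div int n) * int n, snd (D (int (red n z), r)))"
proof -
  have "z = int (red n z) + ((z - 1) div int n) * int n" using red_decomp[OF npos, of z] by (simp add: mult.commute)
  then show ?thesis using per[of "int (red n z)" "(z - 1) div int n" r] by metis
qed

lemma red_in: "red n z \<in> {1..n}" using red_ge1[OF npos] red_le[OF npos] by auto

lemma halfS_fix_iff: "halfS n D r (red n z) = red n z \<longleftrightarrow> snd (D (z, r)) \<noteq> r"
proof -
  have r1: "red n z \<in> {1..n}" by (rule red_in)
  have sn: "snd (D (z, r)) = snd (D (int (red n z), r))" using D_red[of z r] by (metis snd_conv)
  show ?thesis
  proof (cases "snd (D (int (red n z), r)) = r")
    case False
    then show ?thesis using sn r1 unfolding halfS_def by simp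
  next
    case True
    obtain y where y: "D (int (red n z), r) = (y, r)" using True by (cases "D (int (red n z), r)") auto
    have "red n y \<noteq> red n (int (red n z))" using arc_red_ne[OF y] .
    then have "red n y \<noteq> red n z" using red_id_nat r1 by auto
    then show ?thesis using sn True y r1 unfolding halfS_def by simp
  qed
qed

lemma halfS_fix_iff_nat: "i \<in> {1..n} \<Longrightarrow> halfS n D r i = i \<longleftrightarrow> snd (D (int i, r)) \<noteq> r"
  using halfS_fix_iff[of r "int i"] red_id_nat[of i n] by auto

lemma halfS_arc: "i \<in> {1..n} \<Longrightarrow> D (int i, r) = (y, r) \<Longrightarrow> halfS n D r i = red n y"
  unfolding halfS_def by simp

lemma halfS_out: "i \<notin> {1..n} \<Longrightarrow> halfS n D r i = i"
  unfolding halfS_def by auto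

lemma halfS_range: "i \<in> {1..n} \<Longrightarrow> halfS n D r i \<in> {1..n}"
  unfolding halfS_def using red_in by auto

lemma halfS_invol: "i \<in> {1..n} \<Longrightarrow> halfS n D r (halfS n D r i) = i"
proof -
  assume i: "i \<in> {1..n}"
  show ?thesis
  proof (cases "snd (D (int i, r)) = r")
    case False
    then show ?thesis using i unfolding halfS_def by simp
  next
    case True
    obtain y where y: "D (int i, r) = (y, r)" using True by (cases "D (int i, r)") auto
    define k where "k = (y - 1) div int n"
    have yd: "y = int (red n y) + k * int n" using red_decomp[OF npos, of y] unfolding k_def by (simp add: mult.commute)
    have y2: "D (y, r) = (int i, r)" using invol[of "(int i, r)"] y by simp
    have yd': "int (red n y) = y - k * int n" using yd by linarith
    have "D (int (red n y), r) = D (y - k * int n, r)" by (simp only: yd')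
    also have "\<dots> = (int i - k * int n, r)" using per_neg[of y k r] y2 by simp
    finally have e: "D (int (red n y), r) = (int i - k * int n, r)" .
    have "red n (int i - k * int n) = red n (int i)" using red_shift[OF npos, of "int i" "-k"] by simp
    then have "halfS n D r (red n y) = i" using halfS_arc[OF red_in e] red_id_nat i by simp
    then show ?thesis using halfS_arc[OF i y] by simp
  qed
qed

lemma halfS_involution_on: "involution_on n (halfS n D r)"
  unfolding involution_on_def using halfS_range halfS_invol halfS_out by blast


lemma halfS_Ann: "halfS n D r \<in> Ann n"
  unfolding Ann_def
proof (intro CollectI conjI allI impI halfS_involution_on)
  let ?S = "halfS n D r"
  fix i j assume i1: "1 \<le> i" and ij: "i < j" and jn: "j \<le> n" and Sij: "?S i = j"
  have iI: "i \<in> {1..n}" using i1 ij jn by auto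
  have jI: "j \<in> {1..n}" using i1 ij jn by auto
  have Sji: "?S j = i" using halfS_invol[OF iI, of r] Sij by simp
  have sr: "snd (D (int i, r)) = r" using halfS_fix_iff_nat[OF iI, of r] Sij ij by auto
  obtain y where y: "D (int i, r) = (y, r)" using sr by (cases "D (int i, r)") auto
  have y2: "D (y, r) = (int i, r)" using invol[of "(int i, r)"] y by simp
  have ry: "red n y = j" using halfS_arc[OF iI y] Sij by simp
  obtain k where k: "y = int j + k * int n" using red_eqD[OF npos, of y "int j"] ry red_id_nat[of j n] jI by auto
  have b1: "y - int i < int n" "int i - y < int n" using arc_len[OF y] by auto
  have kk: "k * int n = y - int j" using k by simp
  have "-2 * int n < k * int n" "k * int n < int n" using b1 kk i1 ij jn by linarith+
  then have k01: "k = 0 \<or> k = -1" using int_mult_bounds npos by simp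
  have "?S ` {i..j} \<subseteq> {i..j} \<and> (\<forall>x\<in>{i..j}. ?S x \<noteq> x) \<or>
        (\<forall>x\<in>{1..n} - {i..j}. ?S x \<notin> {i..j} \<and> ?S x \<noteq> x)"
  proof (cases "k = 0")
    case True
    then have yj: "y = int j" using k by simp
    have "?S x \<in> {i..j} \<and> ?S x \<noteq> x" if x: "x \<in> {i..j}" for x
    proof -
      consider "x = i" | "x = j" | "i < x \<and> x < j" using x by fastforce
      then show ?thesis
      proof cases
        case 1 then show ?thesis using Sij ij by auto
      next
        case 2 then show ?thesis using Sji ij by auto
      next
        case 3
        then obtain u where u: "D (int x, r) = (u, r)" "int i < u" "u < int j"
          using pH[OF y, of "int x"] yj by auto
        have xI: "x \<in> {1..n}" using 3 i1 jn by auto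
        have "?S x = red n u" using halfS_arc[OF xI u(1)] .
        also have "\<dots> = nat u" using red_id[of u n] u i1 jn by simp
        finally have Sx: "?S x = nat u" .
        have "u \<noteq> int x" using arc_len(1)[OF u(1)] .
        then show ?thesis using Sx u by auto
      qed
    qed
    then show ?thesis by blast
  next
    case False
    then have yj: "y = int j - int n" using k k01 by simp
    have "?S x \<notin> {i..j} \<and> ?S x \<noteq> x" if x: "x \<in> {1..n} - {i..j}" for x
    proof -
      have xI: "x \<in> {1..n}" using x by auto
      have "\<exists>u. y < u \<and> u < int i \<and> ?S x = red n u"
      proof (cases "x < i")
        case True
        then obtain u where u: "D (int x, r) = (u, r)" "y < u" "u < int i"
          using pH[OF y2, of "int x"] yj x jn by auto
        then show ?thesis using halfS_arc[OF xI u(1)] by auto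
      next
        case False
        then have xj: "x > j" using x by auto
        then obtain u where u: "D (int x - int n, r) = (u, r)" "y < u" "u < int i"
          using pH[OF y2, of "int x - int n"] yj x i1 by auto
        have "D (int x, r) = (u + int n, r)" using per1[of "int x - int n" r] u(1) by simp
        then have "?S x = red n (u + int n)" using halfS_arc[OF xI] by simp
        also have "\<dots> = red n u" using red_shift[OF npos, of u 1] by simp
        finally show ?thesis using u by auto
      qed
      then obtain u where u: "y < u" "u < int i" "?S x = red n u" by blast
      have nf: "?S x \<noteq> x"
      proof -
        obtain v where v: "D (int x, r) = (v, r)"
        proof (cases "x < i")
          case True
          then show ?thesis using pH[OF y2, of "int x"] yj x jn that by auto
        next
          case False
          then have xj: "x > j" using x by auto
          then obtain u where u: "D (int x - int n, r) = (u, r)"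
            using pH[OF y2, of "int x - int n"] yj x i1 by auto
          have "D (int x, r) = (u + int n, r)" using per1[of "int x - int n" r] u(1) by simp
          then show ?thesis using that by blast
        qed
        then show ?thesis using halfS_fix_iff_nat[OF xI, of r] by simp
      qed
      have "red n u \<notin> {i..j}"
      proof (cases "u \<ge> 1")
        case True
        then have "red n u = nat u" using red_id[of u n] u iI by simp
        then show ?thesis using u True by auto
      next
        case False
        have "red n u = red n (u + 1 * int n)" using red_shift[OF npos, of u 1] by simp
        also have "\<dots> = nat (u + int n)" using red_id[of "u + int n" n] False u yj jI by simp
        finally show ?thesis using u yj by auto
      qed
      then show ?thesis using u nf by simp
    qed
    then show ?thesis by blast
  qed
  then show "?S ` {i..j} = {i..j}" and
    "{k \<in> {i..j}. ?S k = k} = {} \<or> fixed_points n ?S \<subseteq> {i..j}"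
  proof -
    assume h: "?S ` {i..j} \<subseteq> {i..j} \<and> (\<forall>x\<in>{i..j}. ?S x \<noteq> x) \<or>
        (\<forall>x\<in>{1..n} - {i..j}. ?S x \<notin> {i..j} \<and> ?S x \<noteq> x)"
    have sub: "?S ` {i..j} \<subseteq> {i..j}"
    proof (cases "?S ` {i..j} \<subseteq> {i..j} \<and> (\<forall>x\<in>{i..j}. ?S x \<noteq> x)")
      case True then show ?thesis by blast
    next
      case False
      then have h2: "\<forall>x\<in>{1..n} - {i..j}. ?S x \<notin> {i..j}" using h by blast
      show ?thesis
      proof
        fix z assume "z \<in> ?S ` {i..j}"
        then obtain x where x: "x \<in> {i..j}" "z = ?S x" by blast
        have xI: "x \<in> {1..n}" using x i1 jn by auto
        have "?S (?S x) = x" using halfS_invol[OF xI] .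
        moreover have "?S x \<in> {1..n}" using halfS_range[OF xI] .
        ultimately show "z \<in> {i..j}" using h2 x by (metis DiffI)
      qed
    qed
    show "?S ` {i..j} = {i..j}"
    proof
      show "{i..j} \<subseteq> ?S ` {i..j}"
      proof
        fix x assume x: "x \<in> {i..j}"
        have xI: "x \<in> {1..n}" using x i1 jn by auto
        have "?S (?S x) = x" using halfS_invol[OF xI] .
        moreover have "?S x \<in> {i..j}" using sub x by blast
        ultimately show "x \<in> ?S ` {i..j}" by (metis imageI)
      qed
    qed (rule sub)
    show "{k \<in> {i..j}. ?S k = k} = {} \<or> fixed_points n ?S \<subseteq> {i..j}"
      using h unfolding fixed_points_def by blast
  qed
qed


lemma fix_card_le: "card (fixed_points n (halfS n D r)) \<le> card (fixed_points n (halfS n D (\<not> r)))"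
proof (rule card_inj_on_le)
  let ?f = "\<lambda>i. red n (fst (D (int i, r)))"
  have key: "\<exists>y. D (int i, r) = (y, \<not> r)" if i: "i \<in> fixed_points n (halfS n D r)" for i
  proof -
    have iI: "i \<in> {1..n}" and "halfS n D r i = i" using i unfolding fixed_points_def by auto
    then have "snd (D (int i, r)) \<noteq> r" using halfS_fix_iff_nat by blast
    then show ?thesis by (cases "D (int i, r)") auto
  qed
  show "inj_on ?f (fixed_points n (halfS n D r))"
  proof (rule inj_onI)
    fix i i' assume i: "i \<in> fixed_points n (halfS n D r)" and i': "i' \<in> fixed_points n (halfS n D r)"
      and e: "?f i = ?f i'"
    obtain y where y: "D (int i, r) = (y, \<not> r)" using key[OF i] by blast
    obtain y' where y': "D (int i', r) = (y', \<not> r)" using key[OF i'] by blast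
    have "red n y' = red n y" using e y y' by simp
    then obtain k where k: "y' = y + k * int n" using red_eqD[OF npos] by blast
    have "D (y', \<not> r) = (fst (D (y, \<not> r)) + k * int n, snd (D (y, \<not> r)))" using per k by simp
    moreover have "D (y, \<not> r) = (int i, r)" using invol[of "(int i, r)"] y by simp
    moreover have "D (y', \<not> r) = (int i', r)" using invol[of "(int i', r)"] y' by simp
    ultimately have ii: "int i' = int i + k * int n" by simp
    have "1 \<le> i" "i \<le> n" "1 \<le> i'" "i' \<le> n" using i i' unfolding fixed_points_def by auto
    then have "- int n < k * int n" "k * int n < int n" using ii by linarith+
    then have "k = 0" using int_mult_zero npos by simp
    then show "i = i'" using ii by simp
  qed
  show "?f ` fixed_points n (halfS n D r) \<subseteq> fixed_points n (halfS n D (\<not> r))"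
  proof
    fix z assume "z \<in> ?f ` fixed_points n (halfS n D r)"
    then obtain i where i: "i \<in> fixed_points n (halfS n D r)" and z: "z = ?f i" by blast
    obtain y where y: "D (int i, r) = (y, \<not> r)" using key[OF i] by blast
    have "D (y, \<not> r) = (int i, r)" using invol[of "(int i, r)"] y by simp
    then have "halfS n D (\<not> r) (red n y) = red n y" using halfS_fix_iff[of "\<not> r" y] by simp
    then show "z \<in> fixed_points n (halfS n D (\<not> r))" using z y red_in unfolding fixed_points_def by simp
  qed
  show "finite (fixed_points n (halfS n D (\<not> r)))" unfolding fixed_points_def by simp
qed

lemma fix_card_eq: "card (fixed_points n (halfS n D False)) = card (fixed_points n (halfS n D True))"
  using fix_card_le[of True] fix_card_le[of False] by simp

end

lemma invol_even:
  assumes "finite N" "\<forall>x\<in>N. S x \<in> N \<and> S x \<noteq> x \<and> S (S x) = x"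
  shows "even (card N)"
  using assms
proof (induction N rule: finite_psubset_induct)
  case (psubset N)
  show ?case
  proof (cases "N = {}")
    case True then show ?thesis by simp
  next
    case False
    then obtain x where x: "x \<in> N" by blast
    let ?N' = "N - {x, S x}"
    have sub: "?N' \<subset> N" using x by auto
    have inv': "\<forall>z\<in>?N'. S z \<in> ?N' \<and> S z \<noteq> z \<and> S (S z) = z"
      using psubset.prems x by (metis Diff_iff insert_iff singletonD)
    have "even (card ?N')" using psubset.IH[OF sub inv'] .
    moreover have "card N = card ?N' + 2"
    proof -
      have "{x, S x} \<subseteq> N" "card {x, S x} = 2" using x psubset.prems by auto
      then show ?thesis using card_Diff_subset[of "{x, S x}" N] psubset.hyps card_mono[of N "{x, S x}"]
        by (simp add: finite_subset)
    qed
    ultimately show ?thesis by simp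
  qed
qed

lemma fixed_pos:
  assumes "odd n" "involution_on n S"
  shows "card (fixed_points n S) > 0"
proof -
  let ?N = "{i \<in> {1..n}. S i \<noteq> i}"
  have "even (card ?N)"
  proof (rule invol_even)
    show "\<forall>x\<in>?N. S x \<in> ?N \<and> S x \<noteq> x \<and> S (S x) = x"
    proof
      fix x assume x: "x \<in> ?N"
      have a: "S x \<in> {1..n}" "S (S x) = x" using x assms(2) unfolding involution_on_def by auto
      have "S (S x) \<noteq> S x" using a x by auto
      then show "S x \<in> ?N \<and> S x \<noteq> x \<and> S (S x) = x" using a x by auto
    qed
  qed simp
  moreover have "card (fixed_points n S) + card ?N = n"
  proof -
    have "fixed_points n S \<union> ?N = {1..n}" "fixed_points n S \<inter> ?N = {}" unfolding fixed_points_def by auto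
    then show ?thesis using card_Un_disjoint[of "fixed_points n S" ?N] unfolding fixed_points_def by simp
  qed
  ultimately show ?thesis using assms(1) by (metis add_cancel_right_left gr0I odd_add)
qed

context dg begin

lemma dg_in_class:
  assumes "odd n"
  defines "t \<equiv> card (fixed_points n (topS n D))"
  shows "t > 0" "topS n D \<in> Ann n \<inter> Inv n t" "botS n D \<in> Ann n \<inter> Inv n t"
proof -
  show "t > 0" unfolding t_def topS_halfS using fixed_pos[OF assms(1) halfS_involution_on] .
  show "topS n D \<in> Ann n \<inter> Inv n t" unfolding t_def topS_halfS Inv_def
    using halfS_Ann halfS_involution_on by simp
  show "botS n D \<in> Ann n \<inter> Inv n t" unfolding t_def topS_halfS botS_halfS Inv_def
    using halfS_Ann halfS_involution_on fix_card_eq by simp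
qed

end



definition Lfix :: "nat \<Rightarrow> (nat \<Rightarrow> nat) \<Rightarrow> nat list" where
  "Lfix n S = sorted_list_of_set (fixed_points n S)"

definition en :: "nat \<Rightarrow> (nat \<Rightarrow> nat) \<Rightarrow> int \<Rightarrow> int" where
  "en n S k = int (Lfix n S ! nat (k mod int (card (fixed_points n S))))
     + (k div int (card (fixed_points n S))) * int n"

locale hs =
  fixes n :: nat and S :: "nat \<Rightarrow> nat"
  assumes npos: "n > 0" and ann: "S \<in> Ann n" and inv: "involution_on n S"
    and tpos: "card (fixed_points n S) > 0"
begin

abbreviation "t \<equiv> card (fixed_points n S)"
abbreviation "L \<equiv> Lfix n S"

lemma finF: "finite (fixed_points n S)" unfolding fixed_points_def by simp
lemma setL: "set L = fixed_points n S" unfolding Lfix_def using finF by simp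
lemma lenL: "length L = t" unfolding Lfix_def by simp
lemma sortL: "sorted_wrt (<) L" unfolding Lfix_def using strict_sorted_list_of_set by simp
lemma L_in: "r < t \<Longrightarrow> L ! r \<in> fixed_points n S" using setL lenL nth_mem by metis
lemma L_range: "r < t \<Longrightarrow> 1 \<le> L ! r \<and> L ! r \<le> n" using L_in unfolding fixed_points_def by auto
lemma L_fix: "r < t \<Longrightarrow> S (L ! r) = L ! r" using L_in unfolding fixed_points_def by auto

lemma en_split: "en n S k = int (L ! nat (k mod int t)) + (k div int t) * int n"
  unfolding en_def by simp

lemma mod_nat_lt: "nat (k mod int t) < t"
  using tpos by (simp add: nat_less_iff)

lemma en_bounds: "1 + (k div int t) * int n \<le> en n S k \<and> en n S k \<le> int n + (k div int t) * int n"
  using L_range[OF mod_nat_lt] en_split by auto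

lemma en_mono: assumes "k < k'" shows "en n S k < en n S k'"
proof -
  let ?a = "k div int t" and ?a' = "k' div int t"
  have aa: "?a \<le> ?a'" using assms tpos by (intro zdiv_mono1) auto
  show ?thesis
  proof (cases "?a = ?a'")
    case True
    have "k mod int t < k' mod int t"
    proof -
      have e1: "k = ?a * int t + k mod int t" by simp
      have e2: "k' = ?a * int t + k' mod int t" by (simp add: True)
      from e1 e2 assms show ?thesis by linarith
    qed
    moreover have "0 \<le> k mod int t" using tpos by simp
    ultimately have lt: "nat (k mod int t) < nat (k' mod int t)" by (simp add: nat_less_eq_zless)
    have "L ! nat (k mod int t) < L ! nat (k' mod int t)"
      using sorted_wrt_nth_less[OF sortL lt] lenL mod_nat_lt by simp
    then show ?thesis using en_split True by simp
  next
    case False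
    then have "?a + 1 \<le> ?a'" using aa by simp
    then have "(?a + 1) * int n \<le> ?a' * int n" by (intro mult_right_mono) auto
    then have "?a * int n + int n \<le> ?a' * int n" by (simp add: distrib_right)
    then show ?thesis using en_bounds[of k] en_bounds[of k'] by linarith
  qed
qed

lemma en_strict_mono: "strict_mono (en n S)"
  using en_mono by (simp add: strict_monoI)

lemma en_inj: "inj (en n S)"
  using en_strict_mono strict_mono_imp_inj_on by blast

lemma en_less_iff: "en n S k < en n S k' \<longleftrightarrow> k < k'"
  using en_strict_mono by (simp add: strict_mono_less)

lemma en_pos_iff: "1 \<le> en n S k \<longleftrightarrow> 0 \<le> k"
proof
  assume "0 \<le> k"
  then have "0 \<le> k div int t" using tpos by (simp add: div_int_pos_iff)
  then have "0 \<le> (k div int t) * int n" by simp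
  then show "1 \<le> en n S k" using en_bounds[of k] by linarith
next
  assume h: "1 \<le> en n S k"
  show "0 \<le> k"
  proof (rule ccontr)
    assume "\<not> 0 \<le> k"
    then have "k div int t < 0" using tpos by (intro div_neg_pos_less0) auto
    then have "k div int t \<le> -1" by simp
    then have "(k div int t + 1) * int n \<le> 0" by (simp add: mult_nonpos_nonneg)
    then have "(k div int t) * int n + int n \<le> 0" by (simp add: distrib_right)
    then show False using en_bounds[of k] h by linarith
  qed
qed

lemma en_shift: "en n S (k + a * int t) = en n S k + a * int n"
proof -
  have "(k + a * int t) mod int t = k mod int t" by simp
  moreover have "(k + a * int t) div int t = k div int t + a" using tpos by simp
  ultimately show ?thesis using en_split by (simp add: distrib_right)
qed

definition free :: "int \<Rightarrow> bool" where
  "free z \<longleftrightarrow> S (red n z) = red n z"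

lemma red_en: "red n (en n S k) = L ! nat (k mod int t)"
proof -
  have "red n (en n S k) = red n (int (L ! nat (k mod int t)))"
    using en_split red_shift[OF npos] by simp
  also have "\<dots> = L ! nat (k mod int t)" using red_id_nat L_range[OF mod_nat_lt] by simp
  finally show ?thesis .
qed

lemma en_free: "free (en n S k)"
  unfolding free_def red_en using L_fix[OF mod_nat_lt] by simp

lemma free_en: assumes "free z" shows "\<exists>k. en n S k = z"
proof -
  have "red n z \<in> fixed_points n S" using assms red_ge1[OF npos] red_le[OF npos]
    unfolding free_def fixed_points_def by simp
  then obtain r where r: "r < t" "L ! r = red n z" using setL lenL in_set_conv_nth by metis
  define a where "a = (z - 1) div int n"
  define k where "k = a * int t + int r"
  have "k mod int t = int r" unfolding k_def using r(1) by simp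
  moreover have "k div int t = a" unfolding k_def using r(1) by simp
  ultimately have "en n S k = int (red n z) + a * int n" using en_split r by simp
  also have "\<dots> = z" unfolding a_def using red_decomp[OF npos, of z] by (simp add: mult.commute)
  finally show ?thesis by blast
qed

lemma range_en: "range (en n S) = {z. free z}"
  using en_free free_en by blast

lemma free_shift: "free (z + a * int n) \<longleftrightarrow> free z"
  unfolding free_def using red_shift[OF npos] by simp

definition ien :: "int \<Rightarrow> int" where "ien = inv (en n S)"

lemma ien_en[simp]: "ien (en n S k) = k"
  unfolding ien_def using en_inj by (simp add: inv_f_f)

lemma en_ien: "free z \<Longrightarrow> en n S (ien z) = z"
  unfolding ien_def using free_en by (metis f_inv_into_f rangeI)

lemma ien_shift: "free z \<Longrightarrow> ien (z + a * int n) = ien z + a * int t"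
proof -
  assume f: "free z"
  have "en n S (ien z + a * int t) = z + a * int n" using en_shift en_ien[OF f] by simp
  then show ?thesis by (metis ien_en)
qed

end



definition nofixI :: "(nat \<Rightarrow> nat) \<Rightarrow> nat \<Rightarrow> nat \<Rightarrow> bool" where
  "nofixI S a b \<longleftrightarrow> (\<forall>k. a \<le> k \<and> k \<le> b \<longrightarrow> S k \<noteq> k)"

definition partner :: "nat \<Rightarrow> (nat \<Rightarrow> nat) \<Rightarrow> int \<Rightarrow> int" where
  "partner n S z = (let r = red n z; s = S r in
     if nofixI S (min r s) (max r s) then z - int r + int s
     else if r < s then z - int r + int s - int n else z - int r + int s + int n)"

context hs
begin

abbreviation P where "P \<equiv> partner n S"

lemma S_range: "i \<in> {1..n} \<Longrightarrow> S i \<in> {1..n}" using inv unfolding involution_on_def by blast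
lemma S_inv: "i \<in> {1..n} \<Longrightarrow> S (S i) = i" using inv unfolding involution_on_def by blast

lemma ann_prop: "1 \<le> i \<Longrightarrow> i < j \<Longrightarrow> j \<le> n \<Longrightarrow> S i = j \<Longrightarrow>
   S ` {i..j} = {i..j} \<and> ({k \<in> {i..j}. S k = k} = {} \<or> fixed_points n S \<subseteq> {i..j})"
  using ann unfolding Ann_def by blast

lemma partner_shift: "P (z + a * int n) = P z + a * int n"
  unfolding partner_def Let_def red_shift[OF npos] by simp

lemma partner_base: "i \<in> {1..n} \<Longrightarrow> P (int i) =
   (if nofixI S (min i (S i)) (max i (S i)) then int (S i)
    else if i < S i then int (S i) - int n else int (S i) + int n)"
  unfolding partner_def Let_def using red_id_nat[of i n] by auto

lemma z_decomp: "z = int (red n z) + ((z - 1) div int n) * int n"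
  using red_decomp[OF npos, of z] by (simp add: mult.commute)

lemma partner_red: "P z = P (int (red n z)) + ((z - 1) div int n) * int n"
  using partner_shift[of "int (red n z)" "(z - 1) div int n"] z_decomp[of z] by simp

lemma free_int: "i \<in> {1..n} \<Longrightarrow> free (int i) \<longleftrightarrow> S i = i"
  unfolding free_def using red_id_nat[of i n] by auto

lemma base_P1:
  assumes i: "i \<in> {1..n}" and si: "S i \<noteq> i"
  shows "P (P (int i)) = int i" "\<not> free (P (int i))" "P (int i) \<noteq> int i"
    "red n (P (int i)) = S i"
proof -
  let ?s = "S i"
  have sI: "?s \<in> {1..n}" using S_range[OF i] .
  have ss: "S ?s = i" using S_inv[OF i] .
  have nf_sym: "nofixI S (min ?s (S ?s)) (max ?s (S ?s)) = nofixI S (min i ?s) (max i ?s)"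
    using ss by (simp add: min.commute max.commute)
  have r1: "red n (int ?s) = ?s" using red_id_nat sI by auto
  have r2: "red n (int ?s - int n) = ?s" using red_shift[OF npos, of "int ?s" "-1"] r1 by simp
  have r3: "red n (int ?s + int n) = ?s" using red_shift[OF npos, of "int ?s" "1"] r1 by simp
  have Pi: "P (int i) = (if nofixI S (min i ?s) (max i ?s) then int ?s
    else if i < ?s then int ?s - int n else int ?s + int n)" using partner_base[OF i] .
  have Ps: "P (int ?s) = (if nofixI S (min i ?s) (max i ?s) then int i
    else if ?s < i then int i - int n else int i + int n)"
    using partner_base[OF sI] ss nf_sym by simp
  show "red n (P (int i)) = S i" using Pi r1 r2 r3 by auto
  then show "\<not> free (P (int i))" unfolding free_def using ss si by simp
  show "P (P (int i)) = int i"
  proof (cases "nofixI S (min i ?s) (max i ?s)")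
    case True then show ?thesis using Pi Ps by simp
  next
    case False
    show ?thesis
    proof (cases "i < ?s")
      case True
      have "P (int ?s - int n) = P (int ?s) + (-1) * int n" using partner_shift[of "int ?s" "-1"] by simp
      then show ?thesis using Pi Ps False True by simp
    next
      case lt: False
      have "P (int ?s + int n) = P (int ?s) + 1 * int n" using partner_shift[of "int ?s" "1"] by simp
      then show ?thesis using Pi Ps False lt si by simp
    qed
  qed
  show "P (int i) \<noteq> int i" using Pi si sI i by auto
qed

lemma gen_P1:
  assumes nf: "\<not> free z"
  shows "P (P z) = z" "\<not> free (P z)" "P z \<noteq> z" "red n (P z) = S (red n z)"
proof -
  let ?i = "red n z" and ?a = "(z - 1) div int n"
  have iI: "?i \<in> {1..n}" using red_ge1[OF npos] red_le[OF npos] by auto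
  have si: "S ?i \<noteq> ?i" using nf unfolding free_def by simp
  have Pz: "P z = P (int ?i) + ?a * int n" using partner_red .
  show "P (P z) = z" using Pz partner_shift base_P1(1)[OF iI si] z_decomp[of z] by simp
  show "\<not> free (P z)" using Pz free_shift base_P1(2)[OF iI si] by simp
  show "P z \<noteq> z" using Pz base_P1(3)[OF iI si] z_decomp[of z] by simp
  show "red n (P z) = S (red n z)" using Pz red_shift[OF npos] base_P1(4)[OF iI si] by simp
qed

lemma fixed_exists: "\<exists>f. f \<in> {1..n} \<and> S f = f"
proof -
  have "fixed_points n S \<noteq> {}" using tpos by (metis card.empty less_irrefl)
  then show ?thesis unfolding fixed_points_def by blast
qed

lemma inner_nest:
  assumes ij: "1 \<le> i" "i < j" "j \<le> n" and Sij: "S i = j" and nf: "nofixI S i j"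
    and x: "i < x" "x < j"
  shows "S x \<noteq> x" "i < S x" "S x < j" "P (int x) = int (S x)"
proof -
  have A: "S ` {i..j} = {i..j}" using ann_prop[OF ij Sij] by blast
  have iI: "i \<in> {1..n}" and xI: "x \<in> {1..n}" using ij x by auto
  have Sji: "S j = i" using S_inv[OF iI] Sij by simp
  have "S x \<in> {i..j}" using A x by auto
  moreover show sx: "S x \<noteq> x" using nf x unfolding nofixI_def by auto
  moreover have "S x \<noteq> i" using S_inv[OF xI] Sij x by auto
  moreover have "S x \<noteq> j" using S_inv[OF xI] Sji x by auto
  ultimately show "i < S x" "S x < j" by auto
  then have m1: "i \<le> min x (S x)" "max x (S x) \<le> j" using x by auto
  have "nofixI S (min x (S x)) (max x (S x))" unfolding nofixI_def
  proof (intro allI impI)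
    fix k assume "min x (S x) \<le> k \<and> k \<le> max x (S x)"
    then have "i \<le> k \<and> k \<le> j" using m1 by linarith
    then show "S k \<noteq> k" using nf unfolding nofixI_def by blast
  qed
  then show "P (int x) = int (S x)" using partner_base[OF xI] by simp
qed

lemma outer_nest:
  assumes ij: "1 \<le> i" "i < j" "j \<le> n" and Sij: "S i = j" and nf: "\<not> nofixI S i j"
    and w: "int j - int n < w" "w < int i"
  shows "\<not> free w" "int j - int n < P w" "P w < int i"
proof -
  have A: "S ` {i..j} = {i..j}" and allfix: "fixed_points n S \<subseteq> {i..j}"
  proof -
    have "{k \<in> {i..j}. S k = k} \<noteq> {}" using nf unfolding nofixI_def by auto
    then show "S ` {i..j} = {i..j}" "fixed_points n S \<subseteq> {i..j}" using ann_prop[OF ij Sij] by blast+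
  qed
  have C: "S x \<noteq> x \<and> S x \<in> {1..n} \<and> S x \<notin> {i..j}" if x: "x \<in> {1..n}" "x \<notin> {i..j}" for x
  proof -
    have "S x \<noteq> x" using x allfix unfolding fixed_points_def by auto
    moreover have "S x \<in> {1..n}" using S_range[OF x(1)] .
    moreover have "S x \<notin> {i..j}"
    proof
      assume "S x \<in> {i..j}"
      then have "S (S x) \<in> S ` {i..j}" by blast
      then show False using A S_inv[OF x(1)] x(2) by simp
    qed
    ultimately show ?thesis by blast
  qed
  have nofix_side: "nofixI S a b" if "a \<in> {1..n}" "b \<in> {1..n}" "(a < i \<and> b < i) \<or> (j < a \<and> j < b)" for a b
    unfolding nofixI_def
  proof (intro allI impI)
    fix k assume k: "a \<le> k \<and> k \<le> b"
    show "S k \<noteq> k"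
    proof
      assume "S k = k"
      then have "k \<in> fixed_points n S" using k that(1,2) unfolding fixed_points_def by auto
      then have "k \<in> {i..j}" using allfix by blast
      then show False using k that(3) by auto
    qed
  qed
  have fix_across: "\<not> nofixI S a b" if "a \<le> i" "j \<le> b" for a b
  proof -
    obtain k where k: "i \<le> k" "k \<le> j" "S k = k" using nf unfolding nofixI_def by auto
    then have "a \<le> k \<and> k \<le> b" using that by linarith
    then show ?thesis using k(3) unfolding nofixI_def by blast
  qed
  have "\<not> free w \<and> int j - int n < P w \<and> P w < int i"
  proof (cases "w \<ge> 1")
    case True
    define x where "x = nat w"
    have xw: "w = int x" using True x_def by simp
    have x1: "1 \<le> x" "x < i" using xw True w by linarith+
    have xI: "x \<in> {1..n}" "x \<notin> {i..j}" using x1 ij by auto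
    have cx: "S x \<noteq> x" "S x \<in> {1..n}" "S x \<notin> {i..j}" using C[OF xI] by auto
    have nfw: "\<not> free w" using free_int[OF xI(1)] cx xw by simp
    show ?thesis
    proof (cases "S x < i")
      case True
      have "nofixI S (min x (S x)) (max x (S x))"
        using nofix_side[of "min x (S x)" "max x (S x)"] xI cx True xw w by (auto simp: min_def max_def)
      then have "P w = int (S x)" using partner_base[OF xI(1)] xw by simp
      then show ?thesis using nfw True cx ij by auto
    next
      case False
      then have sxj: "S x > j" using cx by auto
      have "\<not> nofixI S (min x (S x)) (max x (S x))"
        using fix_across[of "min x (S x)" "max x (S x)"] xw w sxj by (auto simp: min_def max_def)
      moreover have "x < S x" using sxj xw w ij by auto
      ultimately have "P w = int (S x) - int n" using partner_base[OF xI(1)] xw by simp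
      then show ?thesis using nfw sxj cx ij by auto
    qed
  next
    case False
    define x where "x = nat (w + int n)"
    have xw: "w = int x - int n" using False x_def w ij by simp
    have x1: "x \<le> n" "j < x" using xw False w by linarith+
    have xI: "x \<in> {1..n}" "x \<notin> {i..j}" using x1 ij by auto
    have cx: "S x \<noteq> x" "S x \<in> {1..n}" "S x \<notin> {i..j}" using C[OF xI] by auto
    have Pw: "P w = P (int x) - int n" using partner_shift[of "int x" "-1"] xw by simp
    have nfw: "\<not> free w" using free_int[OF xI(1)] free_shift[of "int x" "-1"] cx xw by simp
    have xj0: "x > j" using xw w by linarith
    show ?thesis
    proof (cases "S x > j")
      case True
      have "nofixI S (min x (S x)) (max x (S x))"
        using nofix_side[of "min x (S x)" "max x (S x)"] xI cx True xj0 by (auto simp: min_def max_def)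
      then have "P w = int (S x) - int n" using partner_base[OF xI(1)] Pw by simp
      then show ?thesis using nfw True cx ij by auto
    next
      case False
      then have sxi: "S x < i" using cx by auto
      have xj: "x > j" using xj0 by simp
      have "\<not> nofixI S (min x (S x)) (max x (S x))"
        using fix_across[of "min x (S x)" "max x (S x)"] xj sxi by (auto simp: min_def max_def)
      moreover have "\<not> x < S x" using sxi xj ij by auto
      ultimately have "P w = int (S x)" using partner_base[OF xI(1)] Pw by simp
      then show ?thesis using nfw sxi cx ij by auto
    qed
  qed
  then show "\<not> free w" "int j - int n < P w" "P w < int i" by auto
qed


lemma base_P2:
  assumes i: "i \<in> {1..n}" and si: "S i \<noteq> i"
    and w: "min (int i) (P (int i)) < w" "w < max (int i) (P (int i))"
  shows "\<not> free w \<and> min (int i) (P (int i)) < P w \<and> P w < max (int i) (P (int i))"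
proof -
  let ?s = "S i"
  have sI: "?s \<in> {1..n}" using S_range[OF i] .
  have ss: "S ?s = i" using S_inv[OF i] .
  have Pi: "P (int i) = (if nofixI S (min i ?s) (max i ?s) then int ?s
    else if i < ?s then int ?s - int n else int ?s + int n)" using partner_base[OF i] .
  show ?thesis
  proof (cases "nofixI S (min i ?s) (max i ?s)")
    case True
    define lo where "lo = min i ?s"
    define hi where "hi = max i ?s"
    have lohi: "1 \<le> lo" "lo < hi" "hi \<le> n" "S lo = hi" using i sI si ss unfolding lo_def hi_def
      by (auto simp: min_def max_def)
    have nf: "nofixI S lo hi" using True unfolding lo_def hi_def .
    have Pi': "P (int i) = int ?s" using Pi True by simp
    have w2: "int lo < w" "w < int hi" using w Pi' unfolding lo_def hi_def by auto
    define x where "x = nat w"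
    have xw: "w = int x" using w2 x_def by simp
    have x: "lo < x" "x < hi" using w2 xw by auto
    have xI: "x \<in> {1..n}" using x lohi by auto
    have r: "S x \<noteq> x" "lo < S x" "S x < hi" "P (int x) = int (S x)" using inner_nest[OF lohi nf x] by auto
    have "\<not> free w" using free_int[OF xI] r xw by simp
    then show ?thesis using r xw Pi' unfolding lo_def hi_def by auto
  next
    case False
    show ?thesis
    proof (cases "i < ?s")
      case True
      have Pi': "P (int i) = int ?s - int n" using Pi False True by simp
      have nf: "\<not> nofixI S i ?s" using False True by (simp add: min_def max_def)
      have ij: "1 \<le> i" "i < ?s" "?s \<le> n" using i sI True by auto
      have w2: "int ?s - int n < w" "w < int i" using w Pi' sI by auto
      have "\<not> free w" "int ?s - int n < P w" "P w < int i" using outer_nest[OF ij refl nf w2] by auto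
      then show ?thesis using Pi' sI by auto
    next
      case lt: False
      then have lt': "?s < i" using si by simp
      have Pi': "P (int i) = int ?s + int n" using Pi False lt by simp
      have nf: "\<not> nofixI S ?s i" using False lt' by (simp add: min_def max_def)
      have ij: "1 \<le> ?s" "?s < i" "i \<le> n" using i sI lt' by auto
      have w2: "int i - int n < w - int n" "w - int n < int ?s" using w Pi' i by auto
      have r: "\<not> free (w - int n)" "int i - int n < P (w - int n)" "P (w - int n) < int ?s"
        using outer_nest[OF ij ss nf w2] by auto
      have "free (w - int n) = free w" using free_shift[of w "-1"] by simp
      moreover have "P (w - int n) = P w - int n" using partner_shift[of w "-1"] by simp
      ultimately show ?thesis using r Pi' i by auto
    qed
  qed
qed

lemma gen_P2:
  assumes nf: "\<not> free z" and w: "min z (P z) < w" "w < max z (P z)"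
  shows "\<not> free w" "min z (P z) < P w" "P w < max z (P z)"
proof -
  let ?i = "red n z" and ?a = "(z - 1) div int n"
  have iI: "?i \<in> {1..n}" using red_ge1[OF npos] red_le[OF npos] by auto
  have si: "S ?i \<noteq> ?i" using nf unfolding free_def by simp
  have Pz: "P z = P (int ?i) + ?a * int n" using partner_red .
  have zd: "z = int ?i + ?a * int n" using z_decomp .
  have w2: "min (int ?i) (P (int ?i)) < w - ?a * int n" "w - ?a * int n < max (int ?i) (P (int ?i))"
    using w Pz zd by auto
  have r: "\<not> free (w - ?a * int n) \<and> min (int ?i) (P (int ?i)) < P (w - ?a * int n) \<and>
     P (w - ?a * int n) < max (int ?i) (P (int ?i))" using base_P2[OF iI si w2] .
  have "free (w - ?a * int n) = free w" using free_shift[of "w - ?a * int n" ?a] by simp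
  moreover have "P (w - ?a * int n) = P w - ?a * int n" using partner_shift[of "w - ?a * int n" ?a] by simp
  ultimately show "\<not> free w" "min z (P z) < P w" "P w < max z (P z)" using r Pz zd by auto
qed

end



lemma wind_lemma:
  fixes D :: diag and e1 e2 :: "int \<Rightarrow> int" and m :: int
  assumes m1: "\<And>k k'. e1 k < e1 k' \<longleftrightarrow> k < k'" and m2: "\<And>k k'. e2 k < e2 k' \<longleftrightarrow> k < k'"
    and p1: "\<And>k. 1 \<le> e1 k \<longleftrightarrow> 0 \<le> k" and p2: "\<And>k. 1 \<le> e2 k \<longleftrightarrow> 0 \<le> k"
    and V: "\<And>k. D (e2 k, False) = (e1 (k + m), True)"
    and R: "\<And>j. snd (D (j, False)) \<Longrightarrow> j \<in> range e2"
  shows "wind D = m"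
proof -
  let ?f = "\<lambda>k. (e1 (k + m), e2 k)"
  have inj2: "inj e2" using m2 by (metis injI less_irrefl linorder_neqE)
  have injf: "inj ?f" using inj2 by (auto intro!: injI dest: injD)
  have W1: "{(i, j). i > j \<and> D (j, False) = (i, True) \<and> j \<le> 0 \<and> 1 \<le> i} = ?f ` {-m..<0}"
  proof (intro equalityI subsetI)
    fix x assume "x \<in> {(i, j). i > j \<and> D (j, False) = (i, True) \<and> j \<le> 0 \<and> 1 \<le> i}"
    then obtain i j where x: "x = (i, j)" "i > j" "D (j, False) = (i, True)" "j \<le> 0" "1 \<le> i" by blast
    then obtain k where k: "j = e2 k" using R[of j] by auto
    have i: "i = e1 (k + m)" using x k V by simp
    have "k < 0" using p2[of k] x k by simp
    moreover have "0 \<le> k + m" using p1[of "k + m"] x i by simp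
    ultimately show "x \<in> ?f ` {-m..<0}" using x k i by force
  next
    fix x assume "x \<in> ?f ` {-m..<0}"
    then obtain k where k: "x = ?f k" "k < 0" "-m \<le> k" by auto
    have a: "e2 k \<le> 0" using p2[of k] k by simp
    have b: "1 \<le> e1 (k + m)" using p1[of "k + m"] k by simp
    show "x \<in> {(i, j). i > j \<and> D (j, False) = (i, True) \<and> j \<le> 0 \<and> 1 \<le> i}"
      using k a b V by auto
  qed
  have W2: "{(i, j). i < j \<and> D (j, False) = (i, True) \<and> i \<le> 0 \<and> 1 \<le> j} = ?f ` {0..<-m}"
  proof (intro equalityI subsetI)
    fix x assume "x \<in> {(i, j). i < j \<and> D (j, False) = (i, True) \<and> i \<le> 0 \<and> 1 \<le> j}"
    then obtain i j where x: "x = (i, j)" "i < j" "D (j, False) = (i, True)" "i \<le> 0" "1 \<le> j" by blast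
    then obtain k where k: "j = e2 k" using R[of j] by auto
    have i: "i = e1 (k + m)" using x k V by simp
    have "0 \<le> k" using p2[of k] x k by simp
    moreover have "k + m < 0" using p1[of "k + m"] x i by simp
    ultimately show "x \<in> ?f ` {0..<-m}" using x k i by force
  next
    fix x assume "x \<in> ?f ` {0..<-m}"
    then obtain k where k: "x = ?f k" "0 \<le> k" "k < -m" by auto
    have a: "1 \<le> e2 k" using p2[of k] k by simp
    have b: "e1 (k + m) \<le> 0" using p1[of "k + m"] k by simp
    show "x \<in> {(i, j). i < j \<and> D (j, False) = (i, True) \<and> i \<le> 0 \<and> 1 \<le> j}"
      using k a b V by auto
  qed
  have c1: "w1 D = nat m" unfolding w1_def W1
    using card_image[OF inj_on_subset[OF injf subset_UNIV]] by simp
  have c2: "w2 D = nat (- m)" unfolding w2_def W2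
    using card_image[OF inj_on_subset[OF injf subset_UNIV]] by simp
  show ?thesis unfolding wind_def c1 c2 by simp
qed

definition mkD :: "nat \<Rightarrow> (nat \<Rightarrow> nat) \<Rightarrow> (nat \<Rightarrow> nat) \<Rightarrow> int \<Rightarrow> diag" where
  "mkD n S1 S2 m = (\<lambda>(z, r). if r then
      (if S1 (red n z) = red n z then (en n S2 (inv (en n S1) z - m), False) else (partner n S1 z, True))
    else
      (if S2 (red n z) = red n z then (en n S1 (inv (en n S2) z + m), True) else (partner n S2 z, False)))"

locale pr = A: hs n S1 + B: hs n S2 for n S1 S2 +
  fixes m :: int
  assumes teq: "card (fixed_points n S1) = card (fixed_points n S2)"
begin

abbreviation "DD \<equiv> mkD n S1 S2 m"

lemma DT_free: "A.free z \<Longrightarrow> DD (z, True) = (en n S2 (A.ien z - m), False)"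
  unfolding mkD_def A.free_def A.ien_def by simp
lemma DT_nfree: "\<not> A.free z \<Longrightarrow> DD (z, True) = (partner n S1 z, True)"
  unfolding mkD_def A.free_def by simp
lemma DB_free: "B.free z \<Longrightarrow> DD (z, False) = (en n S1 (B.ien z + m), True)"
  unfolding mkD_def B.free_def B.ien_def by simp
lemma DB_nfree: "\<not> B.free z \<Longrightarrow> DD (z, False) = (partner n S2 z, False)"
  unfolding mkD_def B.free_def by simp

lemma D_invol: "DD (DD x) = x"
proof -
  obtain z r where x: "x = (z, r)" by (cases x) auto
  show ?thesis
  proof (cases r)
    case True
    show ?thesis
    proof (cases "A.free z")
      case f: True
      have "B.free (en n S2 (A.ien z - m))" using B.en_free .
      then show ?thesis using x True f DT_free DB_free A.en_ien by simp
    next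
      case nf: False
      show ?thesis using x True nf DT_nfree A.gen_P1[OF nf] by simp
    qed
  next
    case False
    show ?thesis
    proof (cases "B.free z")
      case f: True
      have "A.free (en n S1 (B.ien z + m))" using A.en_free .
      then show ?thesis using x False f DT_free DB_free B.en_ien by simp
    next
      case nf: False
      show ?thesis using x False nf DB_nfree B.gen_P1[OF nf] by simp
    qed
  qed
qed

lemma D_nofix: "DD x \<noteq> x"
proof -
  obtain z r where x: "x = (z, r)" by (cases x) auto
  show ?thesis
  proof (cases r)
    case True
    then show ?thesis using x DT_free DT_nfree A.gen_P1(3) by (cases "A.free z") auto
  next
    case False
    then show ?thesis using x DB_free DB_nfree B.gen_P1(3) by (cases "B.free z") auto
  qed
qed

lemma D_per: "DD (i + int n, r) = (fst (DD (i, r)) + int n, snd (DD (i, r)))"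
proof (cases r)
  case True
  show ?thesis
  proof (cases "A.free i")
    case f: True
    then have f2: "A.free (i + int n)" using A.free_shift[of i 1] by simp
    have "A.ien (i + int n) = A.ien i + int (card (fixed_points n S1))"
      using A.ien_shift[OF f, of 1] by simp
    then have "en n S2 (A.ien (i + int n) - m) = en n S2 (A.ien i - m) + int n"
      using B.en_shift[of "A.ien i - m" 1] teq by (simp add: algebra_simps)
    then show ?thesis using True f f2 DT_free by simp
  next
    case nf: False
    then have f2: "\<not> A.free (i + int n)" using A.free_shift[of i 1] by simp
    have "partner n S1 (i + int n) = partner n S1 i + int n" using A.partner_shift[of i 1] by simp
    then show ?thesis using True nf f2 DT_nfree by simp
  qed
next
  case False
  show ?thesis
  proof (cases "B.free i")
    case f: True
    then have f2: "B.free (i + int n)" using B.free_shift[of i 1] by simp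
    have "B.ien (i + int n) = B.ien i + int (card (fixed_points n S2))"
      using B.ien_shift[OF f, of 1] by simp
    then have "en n S1 (B.ien (i + int n) + m) = en n S1 (B.ien i + m) + int n"
      using A.en_shift[of "B.ien i + m" 1] teq by (simp add: algebra_simps)
    then show ?thesis using False f f2 DB_free by simp
  next
    case nf: False
    then have f2: "\<not> B.free (i + int n)" using B.free_shift[of i 1] by simp
    have "partner n S2 (i + int n) = partner n S2 i + int n" using B.partner_shift[of i 1] by simp
    then show ?thesis using False nf f2 DB_nfree by simp
  qed
qed

lemma D_propT: "propT DD"
  unfolding propT_def
proof (intro allI impI)
  fix z y w assume e: "DD (z, True) = (y, True)" and zw: "z < w" and wy: "w < y"
  have nf: "\<not> A.free z" using e DT_free by (cases "A.free z") auto
  have y: "y = partner n S1 z" using e DT_nfree[OF nf] by simp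
  have r: "\<not> A.free w" "min z (partner n S1 z) < partner n S1 w" "partner n S1 w < max z (partner n S1 z)"
    using A.gen_P2[OF nf, of w] zw wy y by auto
  then show "\<exists>u. DD (w, True) = (u, True) \<and> z < u \<and> u < y" using DT_nfree y zw wy by auto
qed

lemma D_propB: "propB DD"
  unfolding propB_def
proof (intro allI impI)
  fix z y w assume e: "DD (z, False) = (y, False)" and zw: "z < w" and wy: "w < y"
  have nf: "\<not> B.free z" using e DB_free by (cases "B.free z") auto
  have y: "y = partner n S2 z" using e DB_nfree[OF nf] by simp
  have r: "\<not> B.free w" "min z (partner n S2 z) < partner n S2 w" "partner n S2 w < max z (partner n S2 z)"
    using B.gen_P2[OF nf, of w] zw wy y by auto
  then show "\<exists>u. DD (w, False) = (u, False) \<and> z < u \<and> u < y" using DB_nfree y zw wy by auto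
qed

lemma D_propV: "propV DD"
  unfolding propV_def
proof (intro allI impI)
  fix q q' p p' assume e: "DD (q, False) = (p, True)" and e': "DD (q', False) = (p', True)" and qq: "q < q'"
  have f: "B.free q" using e DB_nfree by (cases "B.free q") auto
  have f': "B.free q'" using e' DB_nfree by (cases "B.free q'") auto
  have "B.ien q < B.ien q'" using B.en_less_iff[of "B.ien q" "B.ien q'"] B.en_ien[OF f] B.en_ien[OF f'] qq by simp
  then have "en n S1 (B.ien q + m) < en n S1 (B.ien q' + m)" using A.en_less_iff by simp
  then show "p < p'" using e e' DB_free[OF f] DB_free[OF f'] by simp
qed

lemma D_diag: "is_diagram n DD"
  unfolding is_diagram_def
  using D_invol D_nofix D_per props_imp_nc[OF _ D_propT D_propB D_propV] D_invol by blast

lemma halfS_mk: "halfS n DD True = S1" "halfS n DD False = S2"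
proof -
  show "halfS n DD True = S1"
  proof
    fix i show "halfS n DD True i = S1 i"
    proof (cases "i \<in> {1..n}")
      case False
      then show ?thesis using A.inv unfolding halfS_def involution_on_def by auto
    next
      case iI: True
      show ?thesis
      proof (cases "S1 i = i")
        case True
        then have "A.free (int i)" using A.free_int[OF iI] by simp
        then show ?thesis using DT_free True unfolding halfS_def by simp
      next
        case False
        then have nf: "\<not> A.free (int i)" using A.free_int[OF iI] by simp
        have "red n (partner n S1 (int i)) = S1 i" using A.gen_P1(4)[OF nf] red_id_nat iI by simp
        then show ?thesis using DT_nfree[OF nf] iI unfolding halfS_def by simp
      qed
    qed
  qed
  show "halfS n DD False = S2"
  proof
    fix i show "halfS n DD False i = S2 i"
    proof (cases "i \<in> {1..n}")
      case False
      then show ?thesis using B.inv unfolding halfS_def involution_on_def by auto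
    next
      case iI: True
      show ?thesis
      proof (cases "S2 i = i")
        case True
        then have "B.free (int i)" using B.free_int[OF iI] by simp
        then show ?thesis using DB_free True unfolding halfS_def by simp
      next
        case False
        then have nf: "\<not> B.free (int i)" using B.free_int[OF iI] by simp
        have "red n (partner n S2 (int i)) = S2 i" using B.gen_P1(4)[OF nf] red_id_nat iI by simp
        then show ?thesis using DB_nfree[OF nf] iI unfolding halfS_def by simp
      qed
    qed
  qed
qed

lemma D_wind: "wind DD = m"
proof (rule wind_lemma[OF A.en_less_iff B.en_less_iff A.en_pos_iff B.en_pos_iff])
  show "\<And>k. DD (en n S2 k, False) = (en n S1 (k + m), True)" using DB_free B.en_free by simp
  show "\<And>j. snd (DD (j, False)) \<Longrightarrow> j \<in> range (en n S2)"
    using DB_nfree B.range_en by (metis (mono_tags) mem_Collect_eq snd_conv)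
qed

end



lemma shift_lemma:
  fixes g :: "int \<Rightarrow> int"
  assumes mono: "\<And>k k'. k < k' \<Longrightarrow> g k < g k'" and surj: "\<And>j. \<exists>k. g k = j"
  shows "g k = k + g 0"
proof -
  have le: "k \<le> k' \<Longrightarrow> g k \<le> g k'" for k k' using mono by (cases "k = k'") (auto simp: less_le)
  have step: "g (k + 1) = g k + 1" for k
  proof -
    obtain j where j: "g j = g k + 1" using surj by blast
    have "k < j"
    proof (rule ccontr)
      assume "\<not> k < j" then have "g j \<le> g k" using le by simp
      then show False using j by simp
    qed
    then have "g (k + 1) \<le> g j" using le by simp
    moreover have "g k < g (k + 1)" using mono by simp
    ultimately show ?thesis using j by simp
  qed
  show ?thesis
  proof (induction k rule: int_induct[where k = 0])
    case base then show ?case by simp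
  next
    case (step1 i) then show ?case using step[of i] by simp
  next
    case (step2 i) then show ?case using step[of "i - 1"] by simp
  qed
qed

locale dgo = dg +
  assumes nodd: "odd n"
begin

lemma hsr: "hs n (halfS n D r)"
  by unfold_locales (use npos halfS_Ann halfS_involution_on fixed_pos[OF nodd halfS_involution_on] in auto)

lemma free_iff: "hs.free n (halfS n D r) z \<longleftrightarrow> snd (D (z, r)) \<noteq> r"
  using halfS_fix_iff[of r z] unfolding hs.free_def[OF hsr] .

lemma arc_partner:
  assumes e: "D (z, r) = (y, r)"
  shows "y = partner n (halfS n D r) z"
proof -
  interpret H: hs n "halfS n D r" by (rule hsr)
  let ?S = "halfS n D r"
  let ?i = "red n z" and ?a = "(z - 1) div int n"
  have iI: "?i \<in> {1..n}" by (rule red_in)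
  have zd: "z = int ?i + ?a * int n" using H.z_decomp .
  have Pz: "partner n ?S z = partner n ?S (int ?i) + ?a * int n" using H.partner_red .
  have Dz: "D (z, r) = (fst (D (int ?i, r)) + ?a * int n, snd (D (int ?i, r)))"
    using D_red[of z r] .
  obtain y0 where y0: "D (int ?i, r) = (y0, r)" using Dz e by (cases "D (int ?i, r)") auto
  have yy: "y = y0 + ?a * int n" using Dz y0 e by simp
  let ?s = "?S ?i"
  have sred: "?s = red n y0" using halfS_arc[OF iI y0] .
  have sI: "?s \<in> {1..n}" using halfS_range[OF iI] .
  have si: "?s \<noteq> ?i" using halfS_fix_iff_nat[OF iI, of r] y0 by simp
  obtain k where k: "y0 = int ?s + k * int n" using red_eqD[OF npos, of y0 "int ?s"] sred red_id_nat sI by auto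
  have b1: "y0 - int ?i < int n" "int ?i - y0 < int n" using arc_len[OF y0] by auto
  have fixI: "?S f = f \<longleftrightarrow> snd (D (int f, r)) \<noteq> r" if "f \<in> {1..n}" for f
    using halfS_fix_iff_nat[OF that] .
  have y0P: "y0 = partner n ?S (int ?i)"
  proof (cases "k = 0")
    case True
    then have ys: "y0 = int ?s" using k by simp
    have "nofixI ?S (min ?i ?s) (max ?i ?s)" unfolding nofixI_def
    proof (intro allI impI)
      fix x assume x: "min ?i ?s \<le> x \<and> x \<le> max ?i ?s"
      then have xI: "x \<in> {1..n}" using iI sI by auto
      show "?S x \<noteq> x"
      proof (cases "x = ?i \<or> x = ?s")
        case True
        then show ?thesis using si H.S_inv[OF iI] by auto
      next
        case False
        then have "min (int ?i) y0 < int x" "int x < max (int ?i) y0" using x ys by auto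
        then have mm: "min (int ?i) y0 < int x" "int x < max (int ?i) y0" .
        obtain u where "D (int x, r) = (u, r)"
        proof (cases "int ?i < y0")
          case True
          then have "int ?i < int x" "int x < y0" using mm by auto
          then show ?thesis using pH[OF y0, of "int x"] that by auto
        next
          case False
          have y0i: "D (y0, r) = (int ?i, r)" using invol[of "(int ?i, r)"] y0 by simp
          have "y0 < int x" "int x < int ?i" using mm False by auto
          then show ?thesis using pH[OF y0i, of "int x"] that by auto
        qed
        then show ?thesis using fixI[OF xI] by simp
      qed
    qed
    then show ?thesis using H.partner_base[OF iI] ys by simp
  next
    case False
    obtain f where f: "f \<in> {1..n}" "?S f = f" using H.fixed_exists by blast
    have nfD: "snd (D (int f, r)) = r \<Longrightarrow> False" using fixI[OF f(1)] f(2) by simp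
    have fi: "f \<noteq> ?i" "f \<noteq> ?s" using f si H.S_inv[OF iI] by auto
    show ?thesis
    proof (cases "?i < ?s")
      case True
      have kk: "k * int n = y0 - int ?s" using k by simp
      have "1 \<le> ?i" "?s \<le> n" using iI sI by auto
      then have "-2 * int n < k * int n" "k * int n < int n" using b1 kk True by linarith+
      then have "k = 0 \<or> k = -1" using int_mult_bounds[of "int n" k] npos by simp
      then have "k = -1" using False by simp
      then have ys: "y0 = int ?s - int n" using k by simp
      have y0i: "D (y0, r) = (int ?i, r)" using invol[of "(int ?i, r)"] y0 by simp
      have "?i < f \<and> f < ?s"
      proof (rule ccontr)
        assume "\<not> (?i < f \<and> f < ?s)"
        then have "f < ?i \<or> ?s < f" using fi by auto
        then show False
        proof
          assume "f < ?i"
          moreover have "y0 < int f" using ys sI f by auto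
          ultimately obtain u where "D (int f, r) = (u, r)" using pH[OF y0i, of "int f"] by auto
          then show False using nfD by simp
        next
          assume "?s < f"
          moreover have "int f - int n < int ?i" using f iI by auto
          ultimately obtain u where u: "D (int f - int n, r) = (u, r)" using pH[OF y0i, of "int f - int n"] ys by auto
          have "D (int f, r) = (u + int n, r)" using per1[of "int f - int n" r] u by simp
          then show False using nfD by simp
        qed
      qed
      then have "?i \<le> f \<and> f \<le> ?s" by auto
      then have "\<not> nofixI ?S ?i ?s" using f(2) unfolding nofixI_def by blast
      moreover have "min ?i ?s = ?i" "max ?i ?s = ?s" using True by auto
      ultimately have "\<not> nofixI ?S (min ?i ?s) (max ?i ?s)" by simp
      then show ?thesis using H.partner_base[OF iI] ys True by simp
    next
      case lt: False
      then have lt': "?s < ?i" using si by simp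
      have kk: "k * int n = y0 - int ?s" using k by simp
      have "1 \<le> ?s" "?i \<le> n" using iI sI by auto
      then have "- int n < k * int n" "k * int n < 2 * int n" using b1 kk lt' by linarith+
      moreover have "(k - 1) * int n = k * int n - int n" by (simp add: left_diff_distrib)
      ultimately have "-2 * int n < (k - 1) * int n" "(k - 1) * int n < int n" by linarith+
      then have "k - 1 = 0 \<or> k - 1 = -1" using int_mult_bounds[of "int n" "k - 1"] npos by simp
      then have "k = 1" using False by auto
      then have ys: "y0 = int ?s + int n" using k by simp
      have "?s < f \<and> f < ?i"
      proof (rule ccontr)
        assume "\<not> (?s < f \<and> f < ?i)"
        then have "f < ?s \<or> ?i < f" using fi by auto
        then show False
        proof
          assume "?i < f"
          moreover have "int f < y0" using ys sI f by auto
          ultimately obtain u where "D (int f, r) = (u, r)" using pH[OF y0, of "int f"] by auto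
          then show False using nfD by simp
        next
          assume "f < ?s"
          moreover have "int ?i < int f + int n" using f iI by auto
          ultimately obtain u where u: "D (int f + int n, r) = (u, r)" using pH[OF y0, of "int f + int n"] ys by auto
          have "D (int f, r) = (u - int n, r)" using per1[of "int f" r] u by (cases "D (int f, r)") auto
          then show False using nfD by simp
        qed
      qed
      then have "?s \<le> f \<and> f \<le> ?i" by auto
      then have "\<not> nofixI ?S ?s ?i" using f(2) unfolding nofixI_def by blast
      moreover have "min ?i ?s = ?s" "max ?i ?s = ?i" using lt' by auto
      ultimately have "\<not> nofixI ?S (min ?i ?s) (max ?i ?s)" by simp
      then show ?thesis using H.partner_base[OF iI] ys lt' by simp
    qed
  qed
  show ?thesis using yy y0P Pz by simp
qed


lemma D_eq_mk: "D = mkD n (topS n D) (botS n D) (wind D)"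
proof -
  let ?S1 = "halfS n D True" and ?S2 = "halfS n D False"
  interpret A: hs n ?S1 by (rule hsr)
  interpret B: hs n ?S2 by (rule hsr)
  have teq: "card (fixed_points n ?S1) = card (fixed_points n ?S2)" using fix_card_eq by simp
  interpret M: pr n ?S1 ?S2 "wind D" by unfold_locales (rule teq)
  have fA: "A.free z \<longleftrightarrow> \<not> snd (D (z, True))" for z using free_iff[of True z] by simp
  have fB: "B.free z \<longleftrightarrow> snd (D (z, False))" for z using free_iff[of False z] by simp
  define g where "g k = B.ien (fst (D (en n ?S1 k, True)))" for k
  have Dg: "D (en n ?S1 k, True) = (en n ?S2 (g k), False)" for k
  proof -
    have "\<not> snd (D (en n ?S1 k, True))" using fA A.en_free by blast
    then obtain y where y: "D (en n ?S1 k, True) = (y, False)" by (cases "D (en n ?S1 k, True)") auto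
    have "D (y, False) = (en n ?S1 k, True)" using invol[of "(en n ?S1 k, True)"] y by simp
    then have "B.free y" using fB by simp
    then show ?thesis using y B.en_ien unfolding g_def by simp
  qed
  have gmono: "g k < g k'" if kk: "k < k'" for k k'
  proof -
    have e: "D (en n ?S2 (g k), False) = (en n ?S1 k, True)" using invol[of "(en n ?S1 k, True)"] Dg[of k] by simp
    have e': "D (en n ?S2 (g k'), False) = (en n ?S1 k', True)" using invol[of "(en n ?S1 k', True)"] Dg[of k'] by simp
    have lt: "en n ?S1 k < en n ?S1 k'" using A.en_less_iff kk by simp
    have "g k \<noteq> g k'" using e e' lt by auto
    moreover have "\<not> g k' < g k"
    proof
      assume "g k' < g k"
      then have "en n ?S2 (g k') < en n ?S2 (g k)" using B.en_less_iff by simp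
      then have "en n ?S1 k' < en n ?S1 k" using pV e e' unfolding propV_def by blast
      then show False using lt by simp
    qed
    ultimately show ?thesis by simp
  qed
  have gsurj: "\<exists>k. g k = j" for j
  proof -
    have "snd (D (en n ?S2 j, False))" using fB B.en_free by blast
    then obtain p where p: "D (en n ?S2 j, False) = (p, True)" by (cases "D (en n ?S2 j, False)") auto
    have p2: "D (p, True) = (en n ?S2 j, False)" using invol[of "(en n ?S2 j, False)"] p by simp
    then have "A.free p" using fA by simp
    then have "D (en n ?S1 (A.ien p), True) = (en n ?S2 j, False)" using p2 A.en_ien by simp
    then have "en n ?S2 (g (A.ien p)) = en n ?S2 j" using Dg by simp
    then have "g (A.ien p) = j" using B.en_inj by (simp add: inj_eq)
    then show ?thesis by blast
  qed
  define c where "c = g 0"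
  have gk: "g k = k + c" for k unfolding c_def using shift_lemma[of g k] gmono gsurj by blast
  have DV: "D (en n ?S2 j, False) = (en n ?S1 (j + - c), True)" for j
    using invol[of "(en n ?S1 (j - c), True)"] Dg[of "j - c"] gk[of "j - c"] by simp
  have wD: "wind D = - c"
  proof (rule wind_lemma[OF A.en_less_iff B.en_less_iff A.en_pos_iff B.en_pos_iff DV])
    fix j assume "snd (D (j, False))"
    then have "B.free j" using fB by simp
    then show "j \<in> range (en n ?S2)" using B.range_en by simp
  qed
  have eq: "D x = mkD n ?S1 ?S2 (wind D) x" for x
  proof -
    obtain z r where x: "x = (z, r)" by (cases x) auto
    show ?thesis
    proof (cases r)
      case True
      show ?thesis
      proof (cases "A.free z")
        case f: True
        have "D (z, True) = D (en n ?S1 (A.ien z), True)" using A.en_ien[OF f] by simp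
        also have "\<dots> = (en n ?S2 (A.ien z + c), False)" using Dg gk by simp
        finally show ?thesis using M.DT_free[OF f] x True wD by simp
      next
        case nf: False
        then obtain y where y: "D (z, True) = (y, True)" using fA by (cases "D (z, True)") auto
        then show ?thesis using arc_partner[OF y] M.DT_nfree[OF nf] x True by simp
      qed
    next
      case False
      show ?thesis
      proof (cases "B.free z")
        case f: True
        have "D (z, False) = D (en n ?S2 (B.ien z), False)" using B.en_ien[OF f] by simp
        also have "\<dots> = (en n ?S1 (B.ien z + - c), True)" using DV by simp
        finally show ?thesis using M.DB_free[OF f] x False wD by simp
      next
        case nf: False
        then obtain y where y: "D (z, False) = (y, False)" using fB by (cases "D (z, False)") auto
        then show ?thesis using arc_partner[OF y] M.DB_nfree[OF nf] x False by simp
      qed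
    qed
  qed
  then show ?thesis unfolding topS_halfS botS_halfS by blast
qed

end



lemma bracket_mk:
  assumes n: "odd n" and t: "t > 0" and S1: "S1 \<in> Ann n \<inter> Inv n t" and S2: "S2 \<in> Ann n \<inter> Inv n t"
  shows "bracket n S1 S2 w = mkD n S1 S2 w" "is_diagram n (bracket n S1 S2 w)"
    "topS n (bracket n S1 S2 w) = S1" "botS n (bracket n S1 S2 w) = S2" "wind (bracket n S1 S2 w) = w"
proof -
  have npos: "n > 0" using n by (cases n) auto
  have S1': "S1 \<in> Ann n" "involution_on n S1" "card (fixed_points n S1) = t" using S1 unfolding Inv_def by auto
  have S2': "S2 \<in> Ann n" "involution_on n S2" "card (fixed_points n S2) = t" using S2 unfolding Inv_def by auto
  interpret A: hs n S1 by unfold_locales (use npos S1' t in simp_all)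
  interpret B: hs n S2 by unfold_locales (use npos S2' t in simp_all)
  interpret M: pr n S1 S2 w by unfold_locales (use S1' S2' in simp)
  have P: "is_diagram n (mkD n S1 S2 w) \<and> topS n (mkD n S1 S2 w) = S1 \<and> botS n (mkD n S1 S2 w) = S2
     \<and> wind (mkD n S1 S2 w) = w"
    using M.D_diag M.halfS_mk M.D_wind unfolding topS_halfS botS_halfS by simp
  have U: "D = mkD n S1 S2 w" if "is_diagram n D \<and> topS n D = S1 \<and> botS n D = S2 \<and> wind D = w" for D
  proof -
    interpret G: dgo n D by unfold_locales (use that npos n in simp_all)
    show ?thesis using G.D_eq_mk that by simp
  qed
  show b: "bracket n S1 S2 w = mkD n S1 S2 w" unfolding bracket_def
  proof (rule the_equality)
    show "is_diagram n (mkD n S1 S2 w) \<and> topS n (mkD n S1 S2 w) = S1 \<and> botS n (mkD n S1 S2 w) = S2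
     \<and> wind (mkD n S1 S2 w) = w" using P .
  next
    fix D assume "is_diagram n D \<and> topS n D = S1 \<and> botS n D = S2 \<and> wind D = w"
    then show "D = mkD n S1 S2 w" using U by blast
  qed
  show "is_diagram n (bracket n S1 S2 w)" "topS n (bracket n S1 S2 w) = S1"
    "botS n (bracket n S1 S2 w) = S2" "wind (bracket n S1 S2 w) = w" using P b by auto
qed

lemma diag_bracket:
  assumes n: "odd n" and D: "is_diagram n D"
  defines "t \<equiv> card (fixed_points n (topS n D))"
  shows "t > 0" "topS n D \<in> Ann n \<inter> Inv n t" "botS n D \<in> Ann n \<inter> Inv n t"
    "D = bracket n (topS n D) (botS n D) (wind D)"
proof -
  have npos: "n > 0" using n by (cases n) auto
  interpret G: dgo n D by unfold_locales (use D npos n in simp_all)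
  show t: "t > 0" "topS n D \<in> Ann n \<inter> Inv n t" "botS n D \<in> Ann n \<inter> Inv n t"
    using G.dg_in_class[OF n] unfolding t_def by auto
  show "D = bracket n (topS n D) (botS n D) (wind D)"
    using bracket_mk(1)[OF n t] G.D_eq_mk by simp
qed



section \<open>Linear span\<close>

lemma LS_intro:
  assumes "finite G" "G \<subseteq> X" "f = (\<lambda>E. \<Sum>g\<in>G. c g * g E)"
  shows "f \<in> lin_span X"
  unfolding lin_span_def using assms by (intro CollectI exI[of _ G] exI[of _ c]) simp

lemma LS_zero: "(\<lambda>E. 0) \<in> lin_span X"
proof -
  have "(\<lambda>E. 0) = (\<lambda>E. \<Sum>g\<in>{}. (\<lambda>_. 0) g * g E)" by simp
  then show ?thesis by (intro LS_intro[of "{}"]) auto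
qed

lemma LS_gen: "g \<in> X \<Longrightarrow> g \<in> lin_span X"
proof -
  assume g: "g \<in> X"
  have "g = (\<lambda>E. \<Sum>h\<in>{g}. (\<lambda>_. 1) h * h E)" by simp
  then show ?thesis using g by (intro LS_intro[of "{g}" X g "\<lambda>_. 1"]) auto
qed

lemma LS_add:
  assumes f: "f \<in> lin_span X" and h: "h \<in> lin_span X"
  shows "(\<lambda>E. f E + h E) \<in> lin_span X"
proof -
  obtain G1 c1 where 1: "f = (\<lambda>E. \<Sum>g\<in>G1. c1 g * g E)" "finite G1" "G1 \<subseteq> X" using f unfolding lin_span_def by blast
  obtain G2 c2 where 2: "h = (\<lambda>E. \<Sum>g\<in>G2. c2 g * g E)" "finite G2" "G2 \<subseteq> X" using h unfolding lin_span_def by blast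
  define c where "c g = (if g \<in> G1 then c1 g else 0) + (if g \<in> G2 then c2 g else 0)" for g
  have fin: "finite (G1 \<union> G2)" using 1 2 by simp
  have "(\<Sum>g\<in>G1 \<union> G2. c g * g E) = f E + h E" for E
  proof -
    have "(\<Sum>g\<in>G1 \<union> G2. c g * g E) = (\<Sum>g\<in>G1 \<union> G2. (if g \<in> G1 then c1 g * g E else 0))
        + (\<Sum>g\<in>G1 \<union> G2. (if g \<in> G2 then c2 g * g E else 0))"
    proof -
      have "c g * g E = (if g \<in> G1 then c1 g * g E else 0) + (if g \<in> G2 then c2 g * g E else 0)" for g
        unfolding c_def by (simp add: distrib_right)
      then show ?thesis by (simp add: sum.distrib)
    qed
    also have "(\<Sum>g\<in>G1 \<union> G2. (if g \<in> G1 then c1 g * g E else 0)) = (\<Sum>g\<in>G1. c1 g * g E)"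
      using sum.inter_restrict[OF fin, of "\<lambda>g. c1 g * g E" G1] by (simp add: Int_absorb1)
    also have "(\<Sum>g\<in>G1 \<union> G2. (if g \<in> G2 then c2 g * g E else 0)) = (\<Sum>g\<in>G2. c2 g * g E)"
      using sum.inter_restrict[OF fin, of "\<lambda>g. c2 g * g E" G2] by (simp add: Int_absorb1)
    finally show ?thesis using 1 2 by simp
  qed
  then have "(\<lambda>E. f E + h E) = (\<lambda>E. \<Sum>g\<in>G1 \<union> G2. c g * g E)" by simp
  then show ?thesis using fin 1 2 by (intro LS_intro[of "G1 \<union> G2" X _ c]) auto
qed

lemma LS_scale:
  assumes f: "f \<in> lin_span X"
  shows "(\<lambda>E. a * f E) \<in> lin_span X"
proof -
  obtain G c where 1: "f = (\<lambda>E. \<Sum>g\<in>G. c g * g E)" "finite G" "G \<subseteq> X" using f unfolding lin_span_def by blast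
  have "(\<lambda>E. a * f E) = (\<lambda>E. \<Sum>g\<in>G. (a * c g) * g E)" using 1 by (simp add: sum_distrib_left mult.assoc)
  then show ?thesis using 1 by (intro LS_intro[of G X _ "\<lambda>g. a * c g"]) auto
qed

lemma LS_sum:
  assumes "finite A" "\<forall>a\<in>A. h a \<in> lin_span X"
  shows "(\<lambda>E. \<Sum>a\<in>A. c a * h a E) \<in> lin_span X"
  using assms
proof (induction A rule: finite_induct)
  case empty
  then show ?case using LS_zero by simp
next
  case (insert a A)
  have "h a \<in> lin_span X" using insert.prems by simp
  then have "(\<lambda>E. c a * h a E) \<in> lin_span X" by (rule LS_scale)
  moreover have "(\<lambda>E. \<Sum>a\<in>A. c a * h a E) \<in> lin_span X" using insert by simp
  ultimately have "(\<lambda>E. c a * h a E + (\<Sum>a\<in>A. c a * h a E)) \<in> lin_span X" by (rule LS_add)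
  then show ?case using insert by simp
qed

definition supp :: "('b \<Rightarrow> 'a::zero) \<Rightarrow> 'b set" where "supp f = {E. f E \<noteq> 0}"

definition Lf :: "('b \<Rightarrow> 'a::field) \<Rightarrow> ('b \<Rightarrow> 'a) \<Rightarrow> 'a" where
  "Lf lam f = (\<Sum>E\<in>supp f. f E * lam E)"

lemma Lf_eq: "finite Z \<Longrightarrow> supp f \<subseteq> Z \<Longrightarrow> Lf lam f = (\<Sum>E\<in>Z. f E * lam E)"
  unfolding Lf_def by (rule sum.mono_neutral_left) (auto simp: supp_def)

lemma Lf_lin:
  assumes G: "finite G" and fs: "\<forall>g\<in>G. finite (supp g)"
  shows "Lf lam (\<lambda>E. \<Sum>g\<in>G. c g * g E) = (\<Sum>g\<in>G. c g * Lf lam g)"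
proof -
  let ?Z = "\<Union>g\<in>G. supp g"
  have fZ: "finite ?Z" using G fs by simp
  have s: "supp (\<lambda>E. \<Sum>g\<in>G. c g * g E) \<subseteq> ?Z"
  proof
    fix E assume "E \<in> supp (\<lambda>E. \<Sum>g\<in>G. c g * g E)"
    then have "(\<Sum>g\<in>G. c g * g E) \<noteq> 0" unfolding supp_def by simp
    then obtain g where "g \<in> G" "c g * g E \<noteq> 0" by (meson sum.neutral)
    then show "E \<in> ?Z" unfolding supp_def by auto
  qed
  have "Lf lam (\<lambda>E. \<Sum>g\<in>G. c g * g E) = (\<Sum>E\<in>?Z. (\<Sum>g\<in>G. c g * g E) * lam E)" using Lf_eq[OF fZ s] .
  also have "\<dots> = (\<Sum>g\<in>G. \<Sum>E\<in>?Z. c g * (g E * lam E))"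
    by (simp add: sum_distrib_right sum.swap[of _ G] mult.assoc)
  also have "\<dots> = (\<Sum>g\<in>G. c g * Lf lam g)"
  proof (rule sum.cong[OF refl])
    fix g assume g: "g \<in> G"
    have "supp g \<subseteq> ?Z" using g by auto
    then have "Lf lam g = (\<Sum>E\<in>?Z. g E * lam E)" using Lf_eq[OF fZ] by blast
    then show "(\<Sum>E\<in>?Z. c g * (g E * lam E)) = c g * Lf lam g" by (simp add: sum_distrib_left)
  qed
  finally show ?thesis .
qed

lemma supp_dvec: "supp (dvec D) = {D}"
  unfolding supp_def dvec_def by auto

lemma Lf_dvec: "Lf lam (dvec D) = lam D"
  unfolding Lf_def supp_dvec by (simp add: dvec_def)

lemma Lf_diff:
  "Lf lam (\<lambda>E. dvec X E - a * dvec Y E) = lam X - a * lam Y"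
proof -
  have Z: "supp (\<lambda>E. dvec X E - a * dvec Y E) \<subseteq> {X, Y}" unfolding supp_def dvec_def by auto
  have "Lf lam (\<lambda>E. dvec X E - a * dvec Y E) = (\<Sum>E\<in>{X, Y}. (dvec X E - a * dvec Y E) * lam E)"
    using Lf_eq[OF _ Z] by simp
  also have "\<dots> = (\<Sum>E\<in>{X, Y}. dvec X E * lam E) - a * (\<Sum>E\<in>{X, Y}. dvec Y E * lam E)"
    by (simp add: left_diff_distrib sum_subtractf sum_distrib_left mult.assoc)
  also have "\<dots> = lam X - a * lam Y" unfolding dvec_def
    by (cases "X = Y") auto
  finally show ?thesis .
qed



definition lamf :: "nat \<Rightarrow> 'a::field \<Rightarrow> nat \<Rightarrow> (nat \<Rightarrow> nat) \<Rightarrow> (nat \<Rightarrow> nat) \<Rightarrow> nat \<Rightarrow> diag \<Rightarrow> 'a" where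
  "lamf n q t0 A B \<tau>0 E = (if is_diagram n E \<and> topS n E = A \<and> botS n E = B \<and> wind E mod int t0 = int \<tau>0
     then q powi (- (wind E div int t0)) else 0)"

lemma lam_bracket:
  assumes n: "odd n" and t: "t > 0" and S1: "S1 \<in> Ann n \<inter> Inv n t" and S2: "S2 \<in> Ann n \<inter> Inv n t"
  shows "lamf n q t0 A B \<tau>0 (bracket n S1 S2 w) = (if S1 = A \<and> S2 = B \<and> w mod int t0 = int \<tau>0
     then q powi (- (w div int t0)) else 0)"
proof -
  have h: "is_diagram n (bracket n S1 S2 w)" "topS n (bracket n S1 S2 w) = S1"
    "botS n (bracket n S1 S2 w) = S2" "wind (bracket n S1 S2 w) = w"
    using bracket_mk(2-5)[OF n t S1 S2, of w] by auto
  have c: "(is_diagram n (bracket n S1 S2 w) \<and> topS n (bracket n S1 S2 w) = A \<and> botS n (bracket n S1 S2 w) = B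
     \<and> w mod int t0 = int \<tau>0) = (S1 = A \<and> S2 = B \<and> w mod int t0 = int \<tau>0)"
    using h by simp
  show ?thesis unfolding lamf_def h(4) c ..
qed

lemma gen_Lf_zero:
  fixes q :: "'a::field"
  assumes n: "odd n" and q: "q \<noteq> 0" and i0: "(t0, A, B, \<tau>0) \<in> Jindex n"
    and t: "t > 0" and S1: "S1 \<in> Ann n \<inter> Inv n t" and S2: "S2 \<in> Ann n \<inter> Inv n t"
  shows "Lf (lamf n q t0 A B \<tau>0) (\<lambda>E. dvec (bracket n S1 S2 w) E - q powi s * dvec (bracket n S1 S2 (w + int t * s)) E) = 0"
proof -
  let ?lam = "lamf n q t0 A B \<tau>0"
  have "Lf ?lam (\<lambda>E. dvec (bracket n S1 S2 w) E - q powi s * dvec (bracket n S1 S2 (w + int t * s)) E)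
     = ?lam (bracket n S1 S2 w) - q powi s * ?lam (bracket n S1 S2 (w + int t * s))" by (rule Lf_diff)
  also have "\<dots> = 0"
  proof (cases "S1 = A \<and> S2 = B")
    case True
    have "card (fixed_points n S1) = t" using S1 unfolding Inv_def by simp
    moreover have "card (fixed_points n A) = t0" using i0 unfolding Jindex_def Inv_def by simp
    ultimately have tt: "t0 = t" using True by simp
    have m: "(w + int t * s) mod int t = w mod int t" by (simp add: mult.commute)
    have d: "(w + int t * s) div int t = w div int t + s" using t by (simp add: mult.commute)
    have pw: "q powi s * q powi (- (w div int t + s)) = q powi (- (w div int t))"
      using power_int_add[of q s "- (w div int t + s)"] q by simp
    have l1: "?lam (bracket n S1 S2 w) = (if w mod int t = int \<tau>0 then q powi (- (w div int t)) else 0)"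
      using lam_bracket[OF n t S1 S2, of q t0 A B \<tau>0 w] True tt by simp
    have l2: "?lam (bracket n S1 S2 (w + int t * s)) = (if w mod int t = int \<tau>0 then q powi (- (w div int t + s)) else 0)"
      using lam_bracket[OF n t S1 S2, of q t0 A B \<tau>0 "w + int t * s"] True tt m d by simp
    show ?thesis unfolding l1 l2 using pw by simp
  next
    case False
    have l1: "?lam (bracket n S1 S2 w) = 0"
      using lam_bracket[OF n t S1 S2, of q t0 A B \<tau>0 w] False by auto
    have l2: "?lam (bracket n S1 S2 (w + int t * s)) = 0"
      using lam_bracket[OF n t S1 S2, of q t0 A B \<tau>0 "w + int t * s"] False by auto
    show ?thesis unfolding l1 l2 by simp
  qed
  finally show ?thesis .
qed

lemma omega_Lf_zero:
  fixes q :: "'a::field"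
  assumes n: "odd n" and q: "q \<noteq> 0" and i0: "(t0, A, B, \<tau>0) \<in> Jindex n"
    and f: "f \<in> omega n q"
  shows "Lf (lamf n q t0 A B \<tau>0) f = 0"
proof -
  let ?X = "{(\<lambda>E. dvec (bracket n S1 S2 w) E - q powi s * dvec (bracket n S1 S2 (w + int t * s)) E)
       | t S1 S2 w s. t > 0 \<and> S1 \<in> Ann n \<inter> Inv n t \<and> S2 \<in> Ann n \<inter> Inv n t}"
  have "\<exists>H c. f = (\<lambda>E. \<Sum>g\<in>H. c g * g E) \<and> finite H \<and> H \<subseteq> ?X"
    using f unfolding omega_def lin_span_def mem_Collect_eq .
  then obtain H c where H: "f = (\<lambda>E. \<Sum>g\<in>H. c g * g E)" "finite H" "H \<subseteq> ?X"
    by (elim exE conjE)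
  have g: "finite (supp g) \<and> Lf (lamf n q t0 A B \<tau>0) g = 0" if "g \<in> ?X" for g
  proof -
    obtain t S1 S2 w s where g: "g = (\<lambda>E. dvec (bracket n S1 S2 w) E - q powi s * dvec (bracket n S1 S2 (w + int t * s)) E)"
      "t > 0" "S1 \<in> Ann n \<inter> Inv n t" "S2 \<in> Ann n \<inter> Inv n t" using \<open>g \<in> ?X\<close> unfolding mem_Collect_eq
      by (elim exE conjE)
    have "supp g \<subseteq> {bracket n S1 S2 w, bracket n S1 S2 (w + int t * s)}"
      unfolding g(1) supp_def dvec_def by auto
    then have "finite (supp g)" by (rule finite_subset) simp
    then show ?thesis using gen_Lf_zero[OF n q i0 g(2-4)] g(1) by simp
  qed
  have "Lf (lamf n q t0 A B \<tau>0) f = (\<Sum>g\<in>H. c g * Lf (lamf n q t0 A B \<tau>0) g)"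
  proof -
    have "\<forall>g\<in>H. finite (supp g)" using g H(3) by blast
    then show ?thesis unfolding H(1) by (rule Lf_lin[OF H(2)])
  qed
  also have "\<dots> = 0" using g H(3) by (simp add: subset_iff)
  finally show ?thesis .
qed



lemma Lf_lin_gen:
  assumes G: "finite G" and fs: "\<forall>i\<in>G. finite (supp (h i))"
  shows "Lf lam (\<lambda>E. \<Sum>i\<in>G. c i * h i E) = (\<Sum>i\<in>G. c i * Lf lam (h i))"
proof -
  let ?Z = "\<Union>i\<in>G. supp (h i)"
  have fZ: "finite ?Z" using G fs by simp
  have s: "supp (\<lambda>E. \<Sum>i\<in>G. c i * h i E) \<subseteq> ?Z"
  proof
    fix E assume "E \<in> supp (\<lambda>E. \<Sum>i\<in>G. c i * h i E)"
    then have "(\<Sum>i\<in>G. c i * h i E) \<noteq> 0" unfolding supp_def by simp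
    then obtain i where "i \<in> G" "c i * h i E \<noteq> 0" by (meson sum.neutral)
    then show "E \<in> ?Z" unfolding supp_def by auto
  qed
  have "Lf lam (\<lambda>E. \<Sum>i\<in>G. c i * h i E) = (\<Sum>E\<in>?Z. (\<Sum>i\<in>G. c i * h i E) * lam E)" using Lf_eq[OF fZ s] .
  also have "\<dots> = (\<Sum>i\<in>G. \<Sum>E\<in>?Z. c i * (h i E * lam E))"
    by (simp add: sum_distrib_right sum.swap[of _ G] mult.assoc)
  also have "\<dots> = (\<Sum>i\<in>G. c i * Lf lam (h i))"
  proof (rule sum.cong[OF refl])
    fix i assume i: "i \<in> G"
    have "supp (h i) \<subseteq> ?Z" using i by auto
    then have "Lf lam (h i) = (\<Sum>E\<in>?Z. h i E * lam E)" using Lf_eq[OF fZ] by blast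
    then show "(\<Sum>E\<in>?Z. c i * (h i E * lam E)) = c i * Lf lam (h i)" by (simp add: sum_distrib_left)
  qed
  finally show ?thesis .
qed

lemma indep_part:
  fixes q :: "'a::field"
  assumes n: "odd n" and q: "q \<noteq> 0" and G: "finite G" "G \<subseteq> Jindex n"
    and inW: "(\<lambda>E. \<Sum>i\<in>G. c i * (case i of (t, S1, S2, \<tau>) \<Rightarrow> dvec (bracket n S1 S2 (int \<tau>))) E) \<in> omega n q"
    and i0: "i0 \<in> G"
  shows "c i0 = 0"
proof -
  let ?b = "\<lambda>i. case i of (t, S1, S2, \<tau>) \<Rightarrow> (dvec (bracket n S1 S2 (int \<tau>)) :: diag \<Rightarrow> 'a)"
  obtain t0 A B \<tau>0 where i0e: "i0 = (t0, A, B, \<tau>0)" by (cases i0) auto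
  have i0J: "(t0, A, B, \<tau>0) \<in> Jindex n" using i0 G i0e by auto
  let ?lam = "lamf n q t0 A B \<tau>0"
  have z: "Lf ?lam (\<lambda>E. \<Sum>i\<in>G. c i * ?b i E) = 0" using omega_Lf_zero[OF n q i0J inW] .
  have bval: "Lf ?lam (?b i) = (if i = i0 then 1 else 0)" if iG: "i \<in> G" for i
  proof -
    obtain t S1 S2 \<tau> where ie: "i = (t, S1, S2, \<tau>)" by (cases i) auto
    have iJ: "t > 0" "S1 \<in> Ann n \<inter> Inv n t" "S2 \<in> Ann n \<inter> Inv n t" "\<tau> < t"
      using iG G ie unfolding Jindex_def by auto
    have "Lf ?lam (?b i) = ?lam (bracket n S1 S2 (int \<tau>))" using ie Lf_dvec by simp
    also have "\<dots> = (if S1 = A \<and> S2 = B \<and> int \<tau> mod int t0 = int \<tau>0 then q powi (- (int \<tau> div int t0)) else 0)"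
      by (rule lam_bracket[OF n iJ(1-3)])
    also have "\<dots> = (if i = i0 then 1 else 0)"
    proof (cases "S1 = A")
      case True
      have "card (fixed_points n S1) = t" using iJ unfolding Inv_def by simp
      moreover have "card (fixed_points n A) = t0" using i0J unfolding Jindex_def Inv_def by simp
      ultimately have tt: "t0 = t" using True by simp
      have "int \<tau> mod int t = int \<tau>" "int \<tau> div int t = 0" using iJ(4) by auto
      then show ?thesis using tt True ie i0e by auto
    next
      case False
      then show ?thesis using ie i0e by auto
    qed
    finally show ?thesis .
  qed
  have fs: "\<forall>i\<in>G. finite (supp (?b i))"
  proof
    fix i assume "i \<in> G"
    obtain t S1 S2 \<tau> where ie: "i = (t, S1, S2, \<tau>)" by (cases i) auto
    show "finite (supp (?b i))" using ie by (simp add: supp_dvec)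
  qed
  have "Lf ?lam (\<lambda>E. \<Sum>i\<in>G. c i * ?b i E) = (\<Sum>i\<in>G. c i * Lf ?lam (?b i))"
    by (rule Lf_lin_gen[OF G(1) fs])
  also have "\<dots> = (\<Sum>i\<in>G. (if i = i0 then c i else 0))"
    by (rule sum.cong[OF refl]) (simp add: bval)
  also have "\<dots> = c i0" using G(1) i0 by simp
  finally show ?thesis using z by simp
qed

lemma span_part:
  fixes q :: "'a::field"
  assumes n: "odd n" and q: "q \<noteq> 0" and x: "x \<in> Dn n"
  shows "\<exists>G c. finite G \<and> G \<subseteq> Jindex n \<and>
    (\<lambda>E. x E - (\<Sum>i\<in>G. c i * (case i of (t, S1, S2, \<tau>) \<Rightarrow> dvec (bracket n S1 S2 (int \<tau>))) E)) \<in> omega n q"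
proof -
  let ?b = "\<lambda>i. case i of (t, S1, S2, \<tau>) \<Rightarrow> (dvec (bracket n S1 S2 (int \<tau>)) :: diag \<Rightarrow> 'a)"
  let ?X = "{(\<lambda>E. dvec (bracket n S1 S2 w) E - q powi s * dvec (bracket n S1 S2 (w + int t * s)) E)
       | t S1 S2 w s. t > 0 \<and> S1 \<in> Ann n \<inter> Inv n t \<and> S2 \<in> Ann n \<inter> Inv n t}"
  define Z where "Z = {D. x D \<noteq> 0}"
  have fZ: "finite Z" and dZ: "\<And>D. D \<in> Z \<Longrightarrow> is_diagram n D" using x unfolding Z_def Dn_def by auto
  define tt where "tt D = card (fixed_points n (topS n D))" for D
  define idx where "idx D = (tt D, topS n D, botS n D, nat (wind D mod int (tt D)))" for D
  define kk where "kk D = wind D div int (tt D)" for D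
  define gen where "gen D = (\<lambda>E. dvec D E - q powi (- kk D) * ?b (idx D) E)" for D
  have props: "tt D > 0" "topS n D \<in> Ann n \<inter> Inv n (tt D)" "botS n D \<in> Ann n \<inter> Inv n (tt D)"
    "D = bracket n (topS n D) (botS n D) (wind D)" if "D \<in> Z" for D
    using diag_bracket[OF n dZ[OF that]] unfolding tt_def by auto
  have idxJ: "idx D \<in> Jindex n" if "D \<in> Z" for D
  proof -
    have "nat (wind D mod int (tt D)) < tt D" using props(1)[OF that] by (simp add: nat_less_iff)
    then show ?thesis using props[OF that] unfolding idx_def Jindex_def by auto
  qed
  have genX: "gen D \<in> ?X" if D: "D \<in> Z" for D
  proof -
    have f: "int (tt D) * (wind D div int (tt D)) + wind D mod int (tt D) = wind D" by (rule mult_div_mod_eq)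
    have m0: "0 \<le> wind D mod int (tt D)" using props(1)[OF D] by simp
    have f2: "int (tt D) * (- kk D) = - (int (tt D) * kk D)" by simp
    have e1: "wind D + int (tt D) * (- kk D) = int (nat (wind D mod int (tt D)))"
      using f m0 f2 unfolding kk_def by linarith
    have "gen D = (\<lambda>E. dvec (bracket n (topS n D) (botS n D) (wind D)) E - q powi (- kk D) *
       dvec (bracket n (topS n D) (botS n D) (wind D + int (tt D) * (- kk D))) E)"
      unfolding gen_def idx_def e1 using props(4)[OF D] by simp
    then show ?thesis using props(1-3)[OF D] by blast
  qed
  define G where "G = idx ` Z"
  define c where "c i = (\<Sum>D\<in>{D \<in> Z. idx D = i}. x D * q powi (- kk D))" for i
  have fG: "finite G" using fZ unfolding G_def by simp
  have GJ: "G \<subseteq> Jindex n" using idxJ unfolding G_def by auto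
  have eq: "x E - (\<Sum>i\<in>G. c i * ?b i E) = (\<Sum>D\<in>Z. x D * gen D E)" for E
  proof -
    have x1: "x E = (\<Sum>D\<in>Z. x D * dvec D E)"
    proof (cases "E \<in> Z")
      case True
      have "(\<Sum>D\<in>Z. x D * dvec D E) = (\<Sum>D\<in>Z. if D = E then x D else 0)"
        by (rule sum.cong) (auto simp: dvec_def)
      then show ?thesis using True fZ by simp
    next
      case False
      have "(\<Sum>D\<in>Z. x D * dvec D E) = 0" using False by (intro sum.neutral) (auto simp: dvec_def)
      then show ?thesis using False unfolding Z_def by simp
    qed
    have x2: "(\<Sum>i\<in>G. c i * ?b i E) = (\<Sum>D\<in>Z. x D * q powi (- kk D) * ?b (idx D) E)"
    proof -
      have "(\<Sum>i\<in>G. c i * ?b i E) = (\<Sum>i\<in>G. \<Sum>D\<in>{D \<in> Z. idx D = i}. x D * q powi (- kk D) * ?b (idx D) E)"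
      proof (rule sum.cong[OF refl])
        fix i assume "i \<in> G"
        have "c i * ?b i E = (\<Sum>D\<in>{D \<in> Z. idx D = i}. x D * q powi (- kk D) * ?b i E)"
          unfolding c_def by (simp add: sum_distrib_right)
        also have "\<dots> = (\<Sum>D\<in>{D \<in> Z. idx D = i}. x D * q powi (- kk D) * ?b (idx D) E)"
          by (rule sum.cong) auto
        finally show "c i * ?b i E = (\<Sum>D\<in>{D \<in> Z. idx D = i}. x D * q powi (- kk D) * ?b (idx D) E)" .
      qed
      also have "\<dots> = (\<Sum>D\<in>Z. x D * q powi (- kk D) * ?b (idx D) E)"
        using sum.group[OF fZ fG, of idx "\<lambda>D. x D * q powi (- kk D) * ?b (idx D) E"] unfolding G_def by simp
      finally show ?thesis .
    qed
    show ?thesis unfolding x1 x2 gen_def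
      by (simp add: sum_subtractf right_diff_distrib mult.assoc)
  qed
  have "(\<lambda>E. \<Sum>D\<in>Z. x D * gen D E) \<in> omega n q"
    unfolding omega_def by (rule LS_sum[OF fZ]) (use genX LS_gen in blast)
  then have "(\<lambda>E. x E - (\<Sum>i\<in>G. c i * ?b i E)) \<in> omega n q" using eq by simp
  then show ?thesis using fG GJ by blast
qed

theorem main_generic:
  fixes q :: "'a::field"
  assumes n: "odd n" and q: "q \<noteq> 0"
  shows "quotient_basis (Dn n :: (diag \<Rightarrow> 'a) set) (omega n q) (Jindex n)
           (\<lambda>(t, S1, S2, \<tau>). dvec (bracket n S1 S2 (int \<tau>)))"
  unfolding quotient_basis_def
proof (intro conjI ballI allI impI)
  fix i assume i: "i \<in> Jindex n"
  obtain t S1 S2 \<tau> where ie: "i = (t, S1, S2, \<tau>)" by (cases i) auto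
  have iJ: "t > 0" "S1 \<in> Ann n \<inter> Inv n t" "S2 \<in> Ann n \<inter> Inv n t" using i ie unfolding Jindex_def by auto
  have d: "is_diagram n (bracket n S1 S2 (int \<tau>))" using bracket_mk(2)[OF n iJ] .
  show "(case i of (t, S1, S2, \<tau>) \<Rightarrow> dvec (bracket n S1 S2 (int \<tau>))) \<in> Dn n"
    using ie d unfolding Dn_def dvec_def by auto
next
  fix x :: "diag \<Rightarrow> 'a" assume "x \<in> Dn n"
  then show "\<exists>G c. finite G \<and> G \<subseteq> Jindex n \<and>
    (\<lambda>E. x E - (\<Sum>i\<in>G. c i * (case i of (t, S1, S2, \<tau>) \<Rightarrow> dvec (bracket n S1 S2 (int \<tau>))) E)) \<in> omega n q"
    using span_part[OF n q] by blast
next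
  fix G c i assume "finite G" "G \<subseteq> Jindex n"
    "(\<lambda>E. \<Sum>i\<in>G. c i * (case i of (t, S1, S2, \<tau>) \<Rightarrow> dvec (bracket n S1 S2 (int \<tau>))) E) \<in> omega n (q :: 'a)"
    "i \<in> G"
  then show "c i = 0" using indep_part[OF n q] by blast
qed


lemma qvar_nz: "qvar \<noteq> (0::'k::field poly fract)"
  unfolding qvar_def by (simp add: Zero_fract_def eq_fract)

theorem lemma3p3p5:
  fixes n :: nat and F :: "'k::field set" and v :: 'k
  assumes "n \<ge> 3" and "odd n"
    and "is_subfield F" and "transcendental_over v F"
  shows "quotient_basis (Dn n :: (diag \<Rightarrow> 'k poly fract) set) (omega n qvar) (Jindex n)
           (\<lambda>(t, S1, S2, \<tau>). dvec (bracket n S1 S2 (int \<tau>)))"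
  using main_generic[OF assms(2) qvar_nz] .

end
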